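(* Let $\mathcal{L}_4$ be the $G$-orbit of the line $Y_0=Y_2-Y_3=0$ and $\mathcal{L}_7=\{\ell^\sigma:\ell\in\mathcal{L}_4\}$. Then $\mathcal{L}_7$ is a single $G$-orbit consisting of lines meeting $\mathcal{C}$ in exactly one point and not contained in any osculating plane, and every $\ell\in\mathcal{L}_7$ satisfies $OD_2(\ell)=[0,3,\tfrac{q-3}{2},\tfrac{q-1}{2},0]$ and $OD_0(\ell)=[1,2,\tfrac{q-5}{6},\tfrac{q-3}{2},\tfrac{q+1}{3}]$ if $-3$ is a non-square in $\mathbb{F}_q$, $OD_0(\ell)=[1,2,\tfrac{q-7}{6},\tfrac{q-1}{2},\tfrac{q-1}{3}]$ if $-3$ is a square in $\mathbb{F}_q$.
   Context: Let $q$ be a power of a prime $p\neq 2,3$. In $\mathrm{PG}(3,q)$ with coordinates $(Y_0,\dots,Y_3)$, the twisted cubic is $\mathcal{C}=\{P(t)=(1,t,t^2,t^3):t\in\mathbb{F}_q\}\cup\{P(\infty)=(0,0,0,1)\}$. $G\le \mathrm{PGL}(4,q)$ is the image of $\mathrm{PGL}(2,q)$ under the map sending the matrix $\begin{pmatrix}a&b\\c&d\end{pmatrix}$ to $\begin{pmatrix} a^3&a^2b&ab^2&b^3\\ 3a^2c&a^2d+2abc&b^2c+2abd&3b^2d\\ 3ac^2&bc^2+2acd&ad^2+2bcd&3bd^2\\ c^3&c^2d&cd^2&d^3\end{pmatrix}$. Osculating planes: $\Pi(t):-t^3Y_0+3t^2Y_1-3tY_2+Y_3=0$ ($t\in\mathbb{F}_q$),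 $\Pi(\infty):Y_0=0$. Tangent line at $P\in\mathcal{C}$: the line through $P$ meeting $\mathcal{C}$ with multiplicity two at $P$. The symplectic polarity $\sigma$ maps the point $(y_0,y_1,y_2,y_3)$ to the plane $-y_3Y_0+3y_2Y_1-3y_1Y_2+y_0Y_3=0$; for a line $\ell$, $\ell^\sigma$ is the line $\bigcap_{P\in\ell}P^\sigma$. Point classes: $\mathcal{P}_1$ = points of $\mathcal{C}$; $\mathcal{P}_2$ = points not on $\mathcal{C}$ on a tangent line; $\mathcal{P}_3$ = points not on $\mathcal{C}$ on exactly three osculating planes; $\mathcal{P}_4$ = points not on $\mathcal{C}$ on exactly one osculating plane; $\mathcal{P}_5$ = points on no osculating plane. Plane classes: $\mathcal{H}_1$ = osculating planes; $\mathcal{H}_2$ = planes meeting $\mathcal{C}$ in exactly two points; $\mathcal{H}_3$ = exactly three points; $\mathcal{H}_4$ = non-osculating planes meeting $\mathcal{C}$ in exactly one point; $\mathcal{H}_5$ = planes disjoint from $\mathcal{C}$. $OD_0(\ell)$ (resp. $OD_2(\ell)$) is the list of the numbers of points of $\ell$ in $\mathcal{P}_1,\dots,\mathcal{P}_5$ (resp. planes through $\ell$ in $\mathcal{H}_1,\dots,\mathcal{H}_5$). *)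

theory Defs
  imports Complex_Main "HOL-Analysis.Finite_Cartesian_Product" "HOL-Library.Numeral_Type"
begin

text \<open>Coordinates (Y0,Y1,Y2,Y3) are indexed by the type 4 (indices 0,1,2,3).
  Points of PG(3,q) are represented as the set of all nonzero scalar multiples
  of a nonzero vector; lines and planes as sets of points.\<close>

definition v4 :: "'b \<Rightarrow> 'b \<Rightarrow> 'b \<Rightarrow> 'b \<Rightarrow> 'b ^ 4" where
  "v4 a b c d = (\<chi> i::4. if i = 0 then a else if i = 1 then b else if i = 2 then c else d)"

definition pt :: "'a::field ^ 4 \<Rightarrow> ('a ^ 4) set" where
  "pt v = {c *s v | c. c \<noteq> 0}"

definition points :: "('a::field ^ 4) set set" where
  "points = {pt v | v. v \<noteq> 0}"

definition dot4 :: "'a::field ^ 4 \<Rightarrow> 'a ^ 4 \<Rightarrow> 'a" where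
  "dot4 w v = (\<Sum>i\<in>UNIV. w $ i * v $ i)"

definition plane :: "'a::field ^ 4 \<Rightarrow> ('a ^ 4) set set" where
  "plane w = {pt v | v. v \<noteq> 0 \<and> dot4 w v = 0}"

definition planes :: "('a::field ^ 4) set set set" where
  "planes = {plane w | w. w \<noteq> 0}"

definition indep2 :: "'a::field ^ 4 \<Rightarrow> 'a ^ 4 \<Rightarrow> bool" where
  "indep2 u v \<longleftrightarrow> (\<forall>a b. a *s u + b *s v = 0 \<longrightarrow> a = 0 \<and> b = 0)"

definition line :: "'a::field ^ 4 \<Rightarrow> 'a ^ 4 \<Rightarrow> ('a ^ 4) set set" where
  "line u v = {pt (a *s u + b *s v) | a b. a \<noteq> 0 \<or> b \<noteq> 0}"

definition lines :: "('a::field ^ 4) set set set" where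
  "lines = {line u v | u v. indep2 u v}"

text \<open>Parameters: Some t stands for t in F_q, None stands for infinity.\<close>
definition Cvec :: "'a::field option \<Rightarrow> 'a ^ 4" where
  "Cvec t = (case t of None \<Rightarrow> v4 0 0 0 1 | Some s \<Rightarrow> v4 1 s (s^2) (s^3))"

definition Ccurve :: "('a::field ^ 4) set set" where
  "Ccurve = range (\<lambda>t. pt (Cvec t))"

definition oscPlane :: "'a::field option \<Rightarrow> ('a ^ 4) set set" where
  "oscPlane t = (case t of None \<Rightarrow> plane (v4 1 0 0 0)
       | Some s \<Rightarrow> plane (v4 (- (s^3)) (3 * s^2) (- 3 * s) 1))"

text \<open>Tangent line at P(t): spanned by P(t) and the derivative vector (0,1,2t,3t^2);
  at P(infinity): spanned by (0,0,0,1) and (0,0,1,0).\<close>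
definition tangentLine :: "'a::field option \<Rightarrow> ('a ^ 4) set set" where
  "tangentLine t = (case t of None \<Rightarrow> line (v4 0 0 0 1) (v4 0 0 1 0)
       | Some s \<Rightarrow> line (v4 1 s (s^2) (s^3)) (v4 0 1 (2 * s) (3 * s^2)))"

definition nOsc :: "('a::{finite,field} ^ 4) set \<Rightarrow> nat" where
  "nOsc P = card {t. P \<in> oscPlane t}"

definition P1 :: "('a::{finite,field} ^ 4) set set" where
  "P1 = Ccurve"
definition P2 :: "('a::{finite,field} ^ 4) set set" where
  "P2 = {P \<in> points. P \<notin> Ccurve \<and> (\<exists>t. P \<in> tangentLine t)}"
definition P3 :: "('a::{finite,field} ^ 4) set set" where
  "P3 = {P \<in> points. P \<notin> Ccurve \<and> nOsc P = 3}"
definition P4 :: "('a::{finite,field} ^ 4) set set" where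
  "P4 = {P \<in> points. P \<notin> Ccurve \<and> nOsc P = 1}"
definition P5 :: "('a::{finite,field} ^ 4) set set" where
  "P5 = {P \<in> points. nOsc P = 0}"

definition H1 :: "('a::{finite,field} ^ 4) set set set" where
  "H1 = range oscPlane"
definition H2 :: "('a::{finite,field} ^ 4) set set set" where
  "H2 = {H \<in> planes. card (H \<inter> Ccurve) = 2}"
definition H3 :: "('a::{finite,field} ^ 4) set set set" where
  "H3 = {H \<in> planes. card (H \<inter> Ccurve) = 3}"
definition H4 :: "('a::{finite,field} ^ 4) set set set" where
  "H4 = {H \<in> planes. H \<notin> H1 \<and> card (H \<inter> Ccurve) = 1}"
definition H5 :: "('a::{finite,field} ^ 4) set set set" where
  "H5 = {H \<in> planes. H \<inter> Ccurve = {}}"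

definition OD0 :: "('a::{finite,field} ^ 4) set set \<Rightarrow> nat list" where
  "OD0 l = map (\<lambda>X. card (l \<inter> X)) [P1, P2, P3, P4, P5]"

definition OD2 :: "('a::{finite,field} ^ 4) set set \<Rightarrow> nat list" where
  "OD2 l = map (\<lambda>X. card {H \<in> X. l \<subseteq> H}) [H1, H2, H3, H4, H5]"

text \<open>The 4x4 matrix associated with (a b; c d); it acts on row vectors: v \<mapsto> v M.\<close>
definition gmat :: "'a::field \<Rightarrow> 'a \<Rightarrow> 'a \<Rightarrow> 'a \<Rightarrow> 'a ^ 4 ^ 4" where
  "gmat a b c d = v4
     (v4 (a^3) (a^2*b) (a*b^2) (b^3))
     (v4 (3*a^2*c) (a^2*d + 2*a*b*c) (b^2*c + 2*a*b*d) (3*b^2*d))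
     (v4 (3*a*c^2) (b*c^2 + 2*a*c*d) (a*d^2 + 2*b*c*d) (3*b*d^2))
     (v4 (c^3) (c^2*d) (c*d^2) (d^3))"

definition Gmats :: "('a::field ^ 4 ^ 4) set" where
  "Gmats = {gmat a b c d | a b c d. a * d - b * c \<noteq> 0}"

definition actPoint :: "'a::field ^ 4 ^ 4 \<Rightarrow> ('a ^ 4) set \<Rightarrow> ('a ^ 4) set" where
  "actPoint M P = (\<lambda>v. v v* M) ` P"

definition actLine :: "'a::field ^ 4 ^ 4 \<Rightarrow> ('a ^ 4) set set \<Rightarrow> ('a ^ 4) set set" where
  "actLine M l = actPoint M ` l"

definition Gorbit :: "('a::field ^ 4) set set \<Rightarrow> ('a ^ 4) set set set" where
  "Gorbit l = {actLine M l | M. M \<in> Gmats}"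

text \<open>Symplectic polarity: coordinates of the plane y^sigma.\<close>
definition sigcoef :: "'a::field ^ 4 \<Rightarrow> 'a ^ 4" where
  "sigcoef y = v4 (- (y $ 3)) (3 * y $ 2) (- 3 * y $ 1) (y $ 0)"

definition polarLine :: "('a::field ^ 4) set set \<Rightarrow> ('a ^ 4) set set" where
  "polarLine l = {Q \<in> points. \<forall>v. v \<noteq> 0 \<and> pt v \<in> l \<longrightarrow> Q \<in> plane (sigcoef v)}"

text \<open>The line Y0 = Y2 - Y3 = 0.\<close>
definition line0 :: "('a::field ^ 4) set set" where
  "line0 = line (v4 0 1 0 0) (v4 0 0 1 1)"

end

theory Submission
  imports Defs "HOL-Analysis.Cartesian_Space" "HOL-Library.Numeral_Type"
begin


lemma UNIV4: "(UNIV::4 set) = {0,1,2,3}"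
proof -
  have "(4::4) = 0" by simp
  then show ?thesis using UNIV_4 by (metis insert_commute)
qed

lemma sum4: "sum f (UNIV::4 set) = f 0 + f 1 + f 2 + f 3"
  unfolding UNIV4 by (simp add: add.assoc)

lemma v4_nth[simp]: "v4 a b c d $ 0 = a" "v4 a b c d $ 1 = b" "v4 a b c d $ 2 = c" "v4 a b c d $ 3 = d"
  by (simp_all add: v4_def)

lemma vec_eq4: "(v::'b^4) = w \<longleftrightarrow> v$0 = w$0 \<and> v$1 = w$1 \<and> v$2 = w$2 \<and> v$3 = w$3"
proof
  assume h: "v$0 = w$0 \<and> v$1 = w$1 \<and> v$2 = w$2 \<and> v$3 = w$3"
  show "v = w" unfolding vec_eq_iff
  proof
    fix i :: 4 have "i \<in> {0,1,2,3}" using UNIV4 by blast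
    then show "v$i = w$i" using h by auto
  qed
qed simp

lemma v4_eq[simp]: "v4 a b c d = v4 a' b' c' d' \<longleftrightarrow> a = a' \<and> b = b' \<and> c = c' \<and> d = d'"
  by (simp add: vec_eq4)

lemma v4_expand: "v = v4 (v$0) (v$1) (v$2) (v$3)"
  by (simp add: vec_eq4)

lemma v4_zero[simp]: "v4 a b c d = (0::'b::zero^4) \<longleftrightarrow> a = 0 \<and> b = 0 \<and> c = 0 \<and> d = 0"
  by (simp add: vec_eq4)

lemma v4_smult[simp]: "k *s v4 a b c d = v4 (k*a) (k*b) (k*c) (k*d)"
  by (simp add: vec_eq4)

lemma v4_add[simp]: "v4 a b c d + v4 a' b' c' d' = v4 (a+a') (b+b') (c+c') (d+d')"
  by (simp add: vec_eq4)

lemma dot4_v4[simp]: "dot4 (v4 a b c d) (v4 x y z w) = a*x+b*y+c*z+d*w"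
  by (simp add: dot4_def sum4)

lemma vm_v4[simp]: "v4 x y z w v* (v4 r0 r1 r2 r3) = x *s r0 + y *s r1 + z *s r2 + w *s r3"
  by (simp add: vec_eq_iff vector_matrix_mult_def sum4 algebra_simps)



lemma vm_smult: "(c *s v) v* M = c *s (v v* (M::'a::comm_ring_1^'n^'m))"
  by (simp add: vec_eq_iff vector_matrix_mult_def sum_distrib_left algebra_simps)

lemma vm_add: "(u + v) v* M = u v* M + v v* (M::'a::comm_ring_1^'n^'m)"
  by (simp add: vec_eq_iff vector_matrix_mult_def sum.distrib algebra_simps)

lemma dot4_smult: "dot4 w (c *s v) = c * dot4 w v"
  by (simp add: dot4_def sum_distrib_left algebra_simps)

lemma dot4_add: "dot4 w (u + v) = dot4 w u + dot4 w v"
  by (simp add: dot4_def sum.distrib algebra_simps)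

lemma dot4_smult_l: "dot4 (c *s w) v = c * dot4 w v"
  by (simp add: dot4_def sum_distrib_left algebra_simps)

lemma mem_pt: "u \<in> pt v \<longleftrightarrow> (\<exists>c. c \<noteq> 0 \<and> u = c *s v)"
  by (auto simp: pt_def)

lemma pt_self: "v \<in> pt (v::'a::field^4)"
  unfolding mem_pt by (rule exI[of _ 1]) simp

lemma pt_smult: "(c::'a::field) \<noteq> 0 \<Longrightarrow> pt (c *s v) = pt (v::'a^4)"
proof (rule set_eqI)
  fix u assume c: "c \<noteq> 0"
  show "u \<in> pt (c *s v) \<longleftrightarrow> u \<in> pt v"
    unfolding mem_pt
  proof
    assume "\<exists>d. d \<noteq> 0 \<and> u = d *s (c *s v)"
    then obtain d where "d \<noteq> 0" "u = d *s (c *s v)" by blast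
    then show "\<exists>d. d \<noteq> 0 \<and> u = d *s v" using c
      by (intro exI[of _ "d*c"]) (simp add: vector_smult_assoc)
  next
    assume "\<exists>d. d \<noteq> 0 \<and> u = d *s v"
    then obtain d where "d \<noteq> 0" "u = d *s v" by blast
    then show "\<exists>d. d \<noteq> 0 \<and> u = d *s (c *s v)" using c
      by (intro exI[of _ "d/c"]) (simp add: vector_smult_assoc)
  qed
qed

lemma pt_eq: "pt (u::'a::field^4) = pt v \<longleftrightarrow> (\<exists>c. c \<noteq> 0 \<and> u = c *s v)"
proof
  assume "pt u = pt v"
  then have "u \<in> pt v" using pt_self by metis
  then show "\<exists>c. c \<noteq> 0 \<and> u = c *s v" by (simp add: mem_pt)
next
  assume "\<exists>c. c \<noteq> 0 \<and> u = c *s v"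
  then show "pt u = pt v" using pt_smult by blast
qed

lemma pt_nonzero: "(v::'a::field^4) \<noteq> 0 \<Longrightarrow> 0 \<notin> pt v"
  by (auto simp: mem_pt)

lemma pt_in_points[simp]: "pt (v::'a::field^4) \<in> points \<longleftrightarrow> v \<noteq> 0"
proof
  assume "pt v \<in> points"
  then obtain u where u: "u \<noteq> 0" "pt v = pt u" by (auto simp: points_def)
  then obtain c where "c \<noteq> 0" "v = c *s u" using pt_eq by blast
  then show "v \<noteq> 0" using u by (simp add: vec_eq_iff)
qed (auto simp: points_def)

lemma pointsE: "P \<in> points \<Longrightarrow> (\<And>v. v \<noteq> 0 \<Longrightarrow> P = pt v \<Longrightarrow> thesis) \<Longrightarrow> thesis"
  by (auto simp: points_def)

lemma pt_in_plane: "(v::'a::field^4) \<noteq> 0 \<Longrightarrow> pt v \<in> plane w \<longleftrightarrow> dot4 w v = 0"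
proof
  assume "v \<noteq> 0" "pt v \<in> plane w"
  then obtain u where u: "u \<noteq> 0" "dot4 w u = 0" "pt v = pt u" by (auto simp: plane_def)
  then obtain c where "c \<noteq> 0" "v = c *s u" using pt_eq by blast
  then show "dot4 w v = 0" using u by (simp add: dot4_smult)
qed (auto simp: plane_def)

lemma plane_subset_points: "plane w \<subseteq> points"
  by (auto simp: plane_def)

lemma plane_smult: "(c::'a::field) \<noteq> 0 \<Longrightarrow> plane (c *s w) = plane w"
  by (auto simp: plane_def dot4_smult_l)

lemma indep2_comb: "indep2 u v \<Longrightarrow> (a \<noteq> 0 \<or> b \<noteq> 0) \<Longrightarrow> a *s u + b *s v \<noteq> 0"
  by (auto simp: indep2_def)

lemma line_subset_points: "indep2 u v \<Longrightarrow> line u v \<subseteq> (points::('a::field^4) set set)"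
  by (auto simp: line_def indep2_comb)

lemma pt_in_line: "indep2 a b \<Longrightarrow> (v::'a::field^4) \<noteq> 0 \<Longrightarrow>
   pt v \<in> line a b \<longleftrightarrow> (\<exists>x y. v = x *s a + y *s b)"
proof
  assume "v \<noteq> 0" "pt v \<in> line a b"
  then obtain x y where "pt v = pt (x *s a + y *s b)" by (auto simp: line_def)
  then obtain c where "v = c *s (x *s a + y *s b)" using pt_eq by blast
  then show "\<exists>x y. v = x *s a + y *s b"
    by (intro exI[of _ "c*x"] exI[of _ "c*y"]) (simp add: vector_smult_assoc vector_add_ldistrib)
next
  assume "v \<noteq> 0" "\<exists>x y. v = x *s a + y *s b"
  then obtain x y where "v = x *s a + y *s b" by blast
  with \<open>v \<noteq> 0\<close> have "x \<noteq> 0 \<or> y \<noteq> 0" by auto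
  then show "pt v \<in> line a b" unfolding line_def using \<open>v = _\<close> by blast
qed



definition sym3 :: "'a::field \<Rightarrow> 'a \<Rightarrow> 'a^4" where
  "sym3 x y = v4 (x^3) (x^2*y) (x*y^2) (y^3)"
definition pol :: "'a::field \<Rightarrow> 'a \<Rightarrow> 'a \<Rightarrow> 'a \<Rightarrow> 'a^4" where
  "pol x y x' y' = v4 (3*x^2*x') (2*x*y*x' + x^2*y') (y^2*x' + 2*x*y*y') (3*y^2*y')"
definition omega :: "'a::field^4 \<Rightarrow> 'a^4 \<Rightarrow> 'a" where
  "omega v w = dot4 (sigcoef v) w"

lemma vm_gmat: "v v* gmat a b c d = v4
   (v$0*a^3 + v$1*(3*a^2*c) + v$2*(3*a*c^2) + v$3*c^3)
   (v$0*(a^2*b) + v$1*(a^2*d + 2*a*b*c) + v$2*(b*c^2 + 2*a*c*d) + v$3*(c^2*d))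
   (v$0*(a*b^2) + v$1*(b^2*c + 2*a*b*d) + v$2*(a*d^2 + 2*b*c*d) + v$3*(c*d^2))
   (v$0*b^3 + v$1*(3*b^2*d) + v$2*(3*b*d^2) + v$3*d^3)"
  by (subst v4_expand[of v]) (simp add: gmat_def)

lemma sym3_gmat: "sym3 x y v* gmat a b c d = sym3 (a*x+c*y) (b*x+d*y)"
  unfolding vm_gmat by (simp add: sym3_def) algebra

lemma pol_gmat: "pol x y x' y' v* gmat a b c d = pol (a*x+c*y) (b*x+d*y) (a*x'+c*y') (b*x'+d*y')"
  unfolding vm_gmat by (simp add: pol_def) algebra

lemma gmat_inv: "(v v* gmat a b c d) v* gmat d (-b) (-c) a = (a*d-b*c)^3 *s v"
  apply (subst (2) v4_expand[of v])
  unfolding vm_gmat by simp algebra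

lemma omega_expl: "omega v w = - (v$3) * w$0 + 3 * v$2 * w$1 - 3 * v$1 * w$2 + v$0 * w$3"
  by (simp add: omega_def sigcoef_def dot4_def sum4)

lemma omega_gmat: "omega (v v* gmat a b c d) (w v* gmat a b c d) = (a*d-b*c)^3 * omega v w"
  unfolding omega_expl vm_gmat by simp algebra

lemma actPoint_pt: "actPoint M (pt v) = pt (v v* M)"
proof (rule set_eqI)
  fix u
  show "u \<in> actPoint M (pt v) \<longleftrightarrow> u \<in> pt (v v* M)"
  proof
    assume "u \<in> actPoint M (pt v)"
    then obtain w where "w \<in> pt v" "u = w v* M" by (auto simp: actPoint_def)
    then obtain c where "c \<noteq> 0" "u = (c *s v) v* M" by (auto simp: mem_pt)
    then show "u \<in> pt (v v* M)" by (auto simp: mem_pt vm_smult)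
  next
    assume "u \<in> pt (v v* M)"
    then obtain c where c: "c \<noteq> 0" "u = c *s (v v* M)" by (auto simp: mem_pt)
    then have "u = (c *s v) v* M" by (simp add: vm_smult)
    moreover have "c *s v \<in> pt v" using c by (auto simp: mem_pt)
    ultimately show "u \<in> actPoint M (pt v)" by (auto simp: actPoint_def)
  qed
qed

lemma smult_eq0: "(c::'a::field) \<noteq> 0 \<Longrightarrow> c *s (v::'a^4) = 0 \<longleftrightarrow> v = 0"
  by (auto simp: vec_eq_iff)

lemma gmat_inv': "(v v* gmat d (-b) (-c) a) v* gmat a b c d = (a*d-b*c)^3 *s v"
  using gmat_inv[of v d "-b" "-c" a] by (simp add: algebra_simps)

lemma fv_nonzero: "a*d-b*c \<noteq> 0 \<Longrightarrow> (v::'a::field^4) \<noteq> 0 \<Longrightarrow> v v* gmat a b c d \<noteq> 0"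
proof
  assume D: "a*d-b*c \<noteq> 0" and v: "v \<noteq> 0" and h: "v v* gmat a b c d = 0"
  have "(a*d-b*c)^3 *s v = 0" using gmat_inv[of v a b c d] h by simp
  then show False using D v smult_eq0[of "(a*d-b*c)^3" v] by simp
qed

lemma fv_nonzero': "a*d-b*c \<noteq> 0 \<Longrightarrow> (v::'a::field^4) \<noteq> 0 \<Longrightarrow> v v* gmat d (-b) (-c) a \<noteq> 0"
  using fv_nonzero[of d a "-b" "-c" v] by (simp add: algebra_simps)

lemma act_points: "a*d-b*c \<noteq> 0 \<Longrightarrow> P \<in> points \<Longrightarrow> actPoint (gmat a b c d) P \<in> (points::('a::field^4) set set)"
  by (auto elim!: pointsE simp: actPoint_pt fv_nonzero)

lemma act_points': "a*d-b*c \<noteq> 0 \<Longrightarrow> P \<in> points \<Longrightarrow> actPoint (gmat d (-b) (-c) a) P \<in> (points::('a::field^4) set set)"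
  by (auto elim!: pointsE simp: actPoint_pt fv_nonzero')

lemma act_inv: "a*d-b*c \<noteq> 0 \<Longrightarrow> P \<in> points \<Longrightarrow>
   actPoint (gmat d (-b) (-c) a) (actPoint (gmat a b c d) P) = (P::('a::field^4) set)"
  by (auto elim!: pointsE simp: actPoint_pt gmat_inv pt_smult)

lemma act_inv': "a*d-b*c \<noteq> 0 \<Longrightarrow> P \<in> points \<Longrightarrow>
   actPoint (gmat a b c d) (actPoint (gmat d (-b) (-c) a) P) = (P::('a::field^4) set)"
  by (auto elim!: pointsE simp: actPoint_pt gmat_inv' pt_smult)

lemma Cvec_sym3: "Cvec (Some s) = sym3 1 s" "Cvec None = sym3 0 1"
  by (simp_all add: Cvec_def sym3_def)

definition par :: "'a::field \<Rightarrow> 'a \<Rightarrow> 'a option" where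
  "par x y = (if x = 0 then None else Some (y/x))"

lemma sym3_Cvec: "x \<noteq> 0 \<or> y \<noteq> 0 \<Longrightarrow> pt (sym3 x y) = pt (Cvec (par x y))"
proof (cases "x = 0")
  case True
  assume "x \<noteq> 0 \<or> y \<noteq> 0"
  with True have "sym3 x y = y^3 *s Cvec (par x y)"
    by (simp add: par_def Cvec_def sym3_def)
  then show ?thesis using True \<open>x \<noteq> 0 \<or> y \<noteq> 0\<close> by (simp add: pt_smult)
next
  case False
  then have "sym3 x y = x^3 *s Cvec (par x y)"
    by (simp add: par_def Cvec_def sym3_def field_simps power2_eq_square power3_eq_cube)
  then show ?thesis using False by (simp add: pt_smult)
qed

lemma act2_nonzero: "a*d-b*c \<noteq> 0 \<Longrightarrow> x \<noteq> 0 \<or> y \<noteq> 0 \<Longrightarrow> a*x+c*y \<noteq> 0 \<or> b*x+d*y \<noteq> (0::'a::field)"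
proof (rule ccontr)
  assume D: "a*d-b*c \<noteq> 0" and xy: "x \<noteq> 0 \<or> y \<noteq> 0" and "\<not> (a*x+c*y \<noteq> 0 \<or> b*x+d*y \<noteq> 0)"
  then have e: "a*x+c*y = 0" "b*x+d*y = 0" by auto
  have "(a*d-b*c)*x = d*(a*x+c*y) - c*(b*x+d*y)" by algebra
  moreover have "(a*d-b*c)*y = a*(b*x+d*y) - b*(a*x+c*y)" by algebra
  ultimately have "x = 0" "y = 0" using e D by auto
  then show False using xy by auto
qed

lemma Cvec_pair: "\<exists>x y. (x \<noteq> 0 \<or> y \<noteq> 0) \<and> Cvec t = sym3 x (y::'a::field)"
proof (cases t)
  case None then show ?thesis by (intro exI[of _ 0] exI[of _ 1]) (simp add: Cvec_sym3)
next
  case (Some s) then show ?thesis by (intro exI[of _ 1] exI[of _ s]) (simp add: Cvec_sym3)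
qed

lemma act_C: "a*d-b*c \<noteq> 0 \<Longrightarrow> P \<in> Ccurve \<Longrightarrow> actPoint (gmat a b c d) P \<in> (Ccurve::('a::field^4) set set)"
proof -
  assume D: "a*d-b*c \<noteq> 0" and "P \<in> Ccurve"
  then obtain t where P: "P = pt (Cvec t)" by (auto simp: Ccurve_def)
  obtain x y where xy: "x \<noteq> 0 \<or> y \<noteq> 0" "Cvec t = sym3 x (y::'a)" using Cvec_pair by blast
  have "actPoint (gmat a b c d) P = pt (sym3 (a*x+c*y) (b*x+d*y))"
    by (simp add: P xy actPoint_pt sym3_gmat)
  also have "\<dots> = pt (Cvec (par (a*x+c*y) (b*x+d*y)))"
    using act2_nonzero[OF D xy(1)] by (rule sym3_Cvec)
  finally show ?thesis by (simp add: Ccurve_def)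
qed

lemma act_C': "a*d-b*c \<noteq> 0 \<Longrightarrow> P \<in> Ccurve \<Longrightarrow> actPoint (gmat d (-b) (-c) a) P \<in> (Ccurve::('a::field^4) set set)"
  using act_C[of d a "-b" "-c" P] by (simp add: algebra_simps)


definition polP :: "'a::field^4 \<Rightarrow> ('a^4) set set" where
  "polP v = plane (sigcoef v)"

lemma sigcoef_smult: "sigcoef (k *s v) = k *s sigcoef v"
  by (simp add: sigcoef_def vec_eq4 algebra_simps)

lemma polP_smult: "(k::'a::field) \<noteq> 0 \<Longrightarrow> polP (k *s v) = polP v"
  by (simp add: polP_def sigcoef_smult plane_smult)

lemma pt_in_polP: "(u::'a::field^4) \<noteq> 0 \<Longrightarrow> pt u \<in> polP v \<longleftrightarrow> omega v u = 0"
  by (simp add: polP_def omega_def pt_in_plane)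

lemma polP_subset: "polP v \<subseteq> points"
  by (simp add: polP_def plane_subset_points)

lemma osc_polP: "oscPlane t = polP (Cvec t)"
proof (cases t)
  case None
  have "sigcoef (Cvec t) = (-1) *s v4 1 0 0 0" using None
    by (simp add: sigcoef_def Cvec_def)
  moreover have "plane (v4 (-1) 0 0 0) = plane (v4 1 0 0 (0::'a))"
    using plane_smult[of "-1" "v4 1 0 0 (0::'a)"] by simp
  ultimately show ?thesis using None by (simp add: polP_def oscPlane_def)
next
  case (Some s)
  then show ?thesis by (simp add: polP_def oscPlane_def sigcoef_def Cvec_def)
qed

lemma act_polP: "a*d-b*c \<noteq> 0 \<Longrightarrow>
  actPoint (gmat a b c d) ` polP v = polP ((v::'a::field^4) v* gmat a b c d)"
proof (rule set_eqI)
  fix Q assume D: "a*d-b*c \<noteq> 0"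
  show "Q \<in> actPoint (gmat a b c d) ` polP v \<longleftrightarrow> Q \<in> polP (v v* gmat a b c d)"
  proof
    assume "Q \<in> actPoint (gmat a b c d) ` polP v"
    then obtain P where P: "P \<in> polP v" "Q = actPoint (gmat a b c d) P" by auto
    then obtain u where u: "u \<noteq> 0" "P = pt u" using polP_subset pointsE by blast
    then have "omega v u = 0" using P pt_in_polP by blast
    then have "omega (v v* gmat a b c d) (u v* gmat a b c d) = 0" by (simp add: omega_gmat)
    moreover have "u v* gmat a b c d \<noteq> 0" using fv_nonzero[OF D u(1)] .
    ultimately show "Q \<in> polP (v v* gmat a b c d)"
      using P u by (simp add: actPoint_pt pt_in_polP)
  next
    assume Q: "Q \<in> polP (v v* gmat a b c d)"
    then obtain u where u: "u \<noteq> 0" "Q = pt u" using polP_subset pointsE by blast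
    then have o: "omega (v v* gmat a b c d) u = 0" using Q pt_in_polP by blast
    let ?w = "u v* gmat d (-b) (-c) a"
    have w0: "?w \<noteq> 0" using u D fv_nonzero' by blast
    have "(a*d-b*c)^3 * omega v ?w = omega (v v* gmat a b c d) (?w v* gmat a b c d)"
      by (simp add: omega_gmat)
    also have "\<dots> = omega (v v* gmat a b c d) ((a*d-b*c)^3 *s u)" by (simp add: gmat_inv')
    also have "\<dots> = 0" using o by (simp add: omega_def dot4_smult)
    finally have "omega v ?w = 0" using D by simp
    then have "pt ?w \<in> polP v" using w0 pt_in_polP by blast
    moreover have "actPoint (gmat a b c d) (pt ?w) = Q"
      using u D by (simp add: actPoint_pt gmat_inv' pt_smult)
    ultimately show "Q \<in> actPoint (gmat a b c d) ` polP v" by (metis image_eqI)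
  qed
qed

lemma sym3_par_smult: "x \<noteq> 0 \<or> y \<noteq> 0 \<Longrightarrow> \<exists>k. k \<noteq> 0 \<and> sym3 x y = k *s Cvec (par x (y::'a::field))"
proof (cases "x = 0")
  case True
  assume "x \<noteq> 0 \<or> y \<noteq> 0"
  with True show ?thesis
    by (intro exI[of _ "y^3"]) (simp add: par_def Cvec_def sym3_def)
next
  case False
  then show ?thesis
    by (intro exI[of _ "x^3"]) (simp add: par_def Cvec_def sym3_def field_simps power2_eq_square power3_eq_cube)
qed

lemma act_osc: "a*d-b*c \<noteq> 0 \<Longrightarrow> \<exists>t'. actPoint (gmat a b c d) ` oscPlane t = oscPlane (t'::'a::field option)"
proof -
  assume D: "a*d-b*c \<noteq> 0"
  obtain x y where xy: "x \<noteq> 0 \<or> y \<noteq> 0" "Cvec t = sym3 x (y::'a)" using Cvec_pair by blast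
  obtain k where k: "k \<noteq> 0" "sym3 (a*x+c*y) (b*x+d*y) = k *s Cvec (par (a*x+c*y) (b*x+d*y))"
    using sym3_par_smult act2_nonzero[OF D xy(1)] by blast
  have "actPoint (gmat a b c d) ` oscPlane t = polP (sym3 (a*x+c*y) (b*x+d*y))"
    using act_polP[OF D, of "sym3 x y"] by (simp add: osc_polP xy sym3_gmat)
  also have "\<dots> = oscPlane (par (a*x+c*y) (b*x+d*y))" by (simp add: k polP_smult osc_polP)
  finally show ?thesis by blast
qed

lemma act_osc': "a*d-b*c \<noteq> 0 \<Longrightarrow> \<exists>t'. actPoint (gmat d (-b) (-c) a) ` oscPlane t = oscPlane (t'::'a::field option)"
  using act_osc[of d a "-b" "-c" t] by (simp add: algebra_simps)


lemma indep2_act: "a*d-b*c \<noteq> 0 \<Longrightarrow> indep2 u v \<Longrightarrow> indep2 (u v* gmat a b c d) ((v::'a::field^4) v* gmat a b c d)"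
  unfolding indep2_def
proof (intro allI impI)
  fix x y assume D: "a*d-b*c \<noteq> 0" and i: "\<forall>a b. a *s u + b *s v = 0 \<longrightarrow> a = 0 \<and> b = 0"
    and h: "x *s (u v* gmat a b c d) + y *s (v v* gmat a b c d) = 0"
  then have "(x *s u + y *s v) v* gmat a b c d = 0" by (simp add: vm_add vm_smult)
  then have "x *s u + y *s v = 0" using fv_nonzero[OF D] by blast
  then show "x = 0 \<and> y = 0" using i by blast
qed

lemma act_line: "actPoint M ` line u v = line (u v* M) (v v* M)"
proof (rule set_eqI)
  fix Q
  show "Q \<in> actPoint M ` line u v \<longleftrightarrow> Q \<in> line (u v* M) (v v* M)"
  proof
    assume "Q \<in> actPoint M ` line u v"
    then obtain x y where "x \<noteq> 0 \<or> y \<noteq> 0" "Q = actPoint M (pt (x *s u + y *s v))"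
      by (auto simp: line_def)
    then show "Q \<in> line (u v* M) (v v* M)"
      by (auto simp: line_def actPoint_pt vm_add vm_smult)
  next
    assume "Q \<in> line (u v* M) (v v* M)"
    then obtain x y where xy: "x \<noteq> 0 \<or> y \<noteq> 0" "Q = pt (x *s (u v* M) + y *s (v v* M))"
      by (auto simp: line_def)
    then have "Q = actPoint M (pt (x *s u + y *s v))" by (simp add: actPoint_pt vm_add vm_smult)
    moreover have "pt (x *s u + y *s v) \<in> line u v" using xy(1) by (auto simp: line_def)
    ultimately show "Q \<in> actPoint M ` line u v" by blast
  qed
qed

lemma indep2_change: "indep2 u v \<Longrightarrow> (k::'a::field) \<noteq> 0 \<Longrightarrow> \<beta> \<noteq> 0 \<Longrightarrow> indep2 (k *s u) (\<alpha> *s u + \<beta> *s (v::'a^4))"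
  unfolding indep2_def
proof (intro allI impI)
  fix x y assume i: "\<forall>a b. a *s u + b *s v = 0 \<longrightarrow> a = 0 \<and> b = 0" and k: "k \<noteq> 0" and b: "\<beta> \<noteq> 0"
    and h: "x *s (k *s u) + y *s (\<alpha> *s u + \<beta> *s v) = 0"
  have "(x*k + y*\<alpha>) *s u + (y*\<beta>) *s v = x *s (k *s u) + y *s (\<alpha> *s u + \<beta> *s v)"
    by (simp add: vec_eq_iff algebra_simps)
  then have "x*k + y*\<alpha> = 0 \<and> y*\<beta> = 0" using i h by metis
  then show "x = 0 \<and> y = 0" using k b by auto
qed

lemma line_change: "indep2 u v \<Longrightarrow> (k::'a::field) \<noteq> 0 \<Longrightarrow> \<beta> \<noteq> 0 \<Longrightarrow> line (k *s u) (\<alpha> *s u + \<beta> *s (v::'a^4)) = line u v"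
proof -
  assume i: "indep2 u v" and k: "k \<noteq> 0" and b: "\<beta> \<noteq> 0"
  have i2: "indep2 (k *s u) (\<alpha> *s u + \<beta> *s v)" using indep2_change[OF i k b] .
  show ?thesis
  proof (rule set_eqI)
    fix Q
    show "Q \<in> line (k *s u) (\<alpha> *s u + \<beta> *s v) \<longleftrightarrow> Q \<in> line u v"
    proof
      assume Q: "Q \<in> line (k *s u) (\<alpha> *s u + \<beta> *s v)"
      then obtain w where w: "w \<noteq> 0" "Q = pt w" using line_subset_points[OF i2] pointsE by blast
      then obtain x y where "w = x *s (k *s u) + y *s (\<alpha> *s u + \<beta> *s v)" using Q pt_in_line[OF i2] by blast
      then have "w = (x*k + y*\<alpha>) *s u + (y*\<beta>) *s v" by (simp add: vec_eq_iff algebra_simps)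
      then show "Q \<in> line u v" using w pt_in_line[OF i] by blast
    next
      assume Q: "Q \<in> line u v"
      then obtain w where w: "w \<noteq> 0" "Q = pt w" using line_subset_points[OF i] pointsE by blast
      then obtain x y where "w = x *s u + y *s v" using Q pt_in_line[OF i] by blast
      then have "w = ((x - y/\<beta>*\<alpha>)/k) *s (k *s u) + (y/\<beta>) *s (\<alpha> *s u + \<beta> *s v)"
        using k b by (simp add: vec_eq_iff field_simps)
      then show "Q \<in> line (k *s u) (\<alpha> *s u + \<beta> *s v)" using w pt_in_line[OF i2] by blast
    qed
  qed
qed

definition Dv :: "'a::field option \<Rightarrow> 'a^4" where
  "Dv t = (case t of None \<Rightarrow> v4 0 0 1 0 | Some s \<Rightarrow> v4 0 1 (2 * s) (3 * s^2))"

lemma tangent_CD: "tangentLine t = line (Cvec t) (Dv t)"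
  by (cases t) (simp_all add: tangentLine_def Cvec_def Dv_def)

lemma indep_CD: "indep2 (Cvec t) (Dv (t::'a::field option))"
proof (cases t)
  case None then show ?thesis by (simp add: indep2_def Cvec_def Dv_def)
next
  case (Some s)
  then show ?thesis unfolding indep2_def
  proof (intro allI impI)
    fix x y assume "t = Some s" "x *s Cvec t + y *s Dv t = 0"
    then have "x = 0" "x * s + y = 0"
      by (auto simp: Cvec_def Dv_def dest: arg_cong[where f="\<lambda>v. v$0"] arg_cong[where f="\<lambda>v. v$1"])
    then show "x = 0 \<and> y = 0" by simp
  qed
qed

lemma sym3_pol_decomp: "x*y' - y*x' \<noteq> 0 \<Longrightarrow> \<exists>k \<alpha> \<beta>. k \<noteq> 0 \<and> \<beta> \<noteq> 0 \<and>
   sym3 x y = k *s Cvec (par x y) \<and> pol x y x' y' = \<alpha> *s Cvec (par x y) + \<beta> *s Dv (par x (y::'a::field))"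
proof (cases "x = 0")
  case True
  assume h: "x*y' - y*x' \<noteq> 0"
  then have "y \<noteq> 0" "x' \<noteq> 0" using True by auto
  then show ?thesis using True
    by (intro exI[of _ "y^3"] exI[of _ "3*y^2*y'"] exI[of _ "y^2*x'"])
       (simp add: par_def Cvec_def Dv_def sym3_def pol_def)
next
  case False
  assume h: "x*y' - y*x' \<noteq> 0"
  show ?thesis using False h
    by (intro exI[of _ "x^3"] exI[of _ "3*x^2*x'"] exI[of _ "x*(x*y' - y*x')"])
       (simp add: par_def Cvec_def Dv_def sym3_def pol_def field_simps power2_eq_square power3_eq_cube)
qed

lemma tangent_sym3: "x*y' - y*x' \<noteq> 0 \<Longrightarrow> line (sym3 x y) (pol x y x' y') = tangentLine (par x (y::'a::field))"
  using sym3_pol_decomp[of x y' y x'] line_change[OF indep_CD] tangent_CD by metis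

lemma tangent_pair: "\<exists>x y x' y'. x*y' - y*x' \<noteq> 0 \<and> tangentLine t = line (sym3 x y) (pol x y x' (y'::'a::field))"
proof (cases t)
  case None
  have "line (sym3 0 1) (pol 0 1 1 0) = tangentLine (par 0 (1::'a))"
    by (rule tangent_sym3) simp
  then have "tangentLine t = line (sym3 0 1) (pol 0 1 1 0)"
    using None by (simp add: par_def)
  then show ?thesis by (intro exI[of _ 0] exI[of _ 1] exI[of _ 1] exI[of _ 0]) simp
next
  case (Some s)
  have "line (sym3 1 s) (pol 1 s 0 1) = tangentLine (par 1 s)"
    by (rule tangent_sym3) simp
  then have "tangentLine t = line (sym3 1 s) (pol 1 s 0 1)"
    using Some by (simp add: par_def)
  then show ?thesis by (intro exI[of _ 1] exI[of _ s] exI[of _ 0] exI[of _ 1]) simp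
qed

lemma act_tan: "a*d-b*c \<noteq> 0 \<Longrightarrow> \<exists>t'. actPoint (gmat a b c d) ` tangentLine t = tangentLine (t'::'a::field option)"
proof -
  assume D: "a*d-b*c \<noteq> 0"
  obtain x y x' y' where h: "x*y' - y*x' \<noteq> 0" "tangentLine t = line (sym3 x y) (pol x y x' (y'::'a))"
    using tangent_pair by blast
  have e: "(a*x+c*y)*(b*x'+d*y') - (b*x+d*y)*(a*x'+c*y') = (a*d-b*c)*(x*y' - y*x')" by algebra
  have "actPoint (gmat a b c d) ` tangentLine t =
     line (sym3 (a*x+c*y) (b*x+d*y)) (pol (a*x+c*y) (b*x+d*y) (a*x'+c*y') (b*x'+d*y'))"
    by (simp add: h act_line sym3_gmat pol_gmat)
  also have "\<dots> = tangentLine (par (a*x+c*y) (b*x+d*y))"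
    using D h e by (intro tangent_sym3) simp
  finally show ?thesis by blast
qed

lemma act_tan': "a*d-b*c \<noteq> 0 \<Longrightarrow> \<exists>t'. actPoint (gmat d (-b) (-c) a) ` tangentLine t = tangentLine (t'::'a::field option)"
  using act_tan[of d a "-b" "-c" t] by (simp add: algebra_simps)


lemma plane_polP: "(3::'a::field) \<noteq> 0 \<Longrightarrow> plane (w::'a^4) = polP (v4 (w$3) (-(w$2)/3) (w$1/3) (-(w$0)))"
  unfolding polP_def sigcoef_def by (subst v4_expand[of w]) simp

lemma sigcoef_nonzero: "(3::'a::field) \<noteq> 0 \<Longrightarrow> (v::'a^4) \<noteq> 0 \<Longrightarrow> sigcoef v \<noteq> 0"
  unfolding sigcoef_def by (subst (asm) v4_expand[of v]) auto

lemma act_planes: "(3::'a::field) \<noteq> 0 \<Longrightarrow> a*d-b*c \<noteq> 0 \<Longrightarrow> H \<in> planes \<Longrightarrow>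
   actPoint (gmat a b c d) ` H \<in> (planes::('a^4) set set set)"
proof -
  assume 3: "(3::'a) \<noteq> 0" and D: "a*d-b*c \<noteq> 0" and "H \<in> planes"
  then obtain w where w: "w \<noteq> 0" "H = plane (w::'a^4)" by (auto simp: planes_def)
  let ?v = "v4 (w$3) (-(w$2)/3) (w$1/3) (-(w$0))"
  have "?v \<noteq> 0" using w 3 by (subst (asm) v4_expand[of w]) auto
  then have "?v v* gmat a b c d \<noteq> 0" using fv_nonzero[OF D] by blast
  then have "sigcoef (?v v* gmat a b c d) \<noteq> 0" using sigcoef_nonzero[OF 3] by blast
  moreover have "actPoint (gmat a b c d) ` H = plane (sigcoef (?v v* gmat a b c d))"
    using w plane_polP[OF 3, of w] act_polP[OF D, of ?v] by (simp add: polP_def)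
  ultimately show ?thesis by (auto simp: planes_def)
qed

lemma act_planes': "(3::'a::field) \<noteq> 0 \<Longrightarrow> a*d-b*c \<noteq> 0 \<Longrightarrow> H \<in> planes \<Longrightarrow>
   actPoint (gmat d (-b) (-c) a) ` H \<in> (planes::('a^4) set set set)"
  using act_planes[of d a "-b" "-c" H] by (simp add: algebra_simps)

lemma act_lines: "a*d-b*c \<noteq> 0 \<Longrightarrow> l \<in> lines \<Longrightarrow>
   actPoint (gmat a b c d) ` l \<in> (lines::('a::field^4) set set set)"
proof -
  assume D: "a*d-b*c \<noteq> 0" and "l \<in> lines"
  then obtain u v where uv: "indep2 u v" "l = line u (v::'a^4)" by (auto simp: lines_def)
  then have "indep2 (u v* gmat a b c d) (v v* gmat a b c d)" using indep2_act[OF D] by blast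
  then show ?thesis using uv by (auto simp: lines_def act_line)
qed

lemma act_lines': "a*d-b*c \<noteq> 0 \<Longrightarrow> l \<in> lines \<Longrightarrow>
   actPoint (gmat d (-b) (-c) a) ` l \<in> (lines::('a::field^4) set set set)"
  using act_lines[of d a "-b" "-c" l] by (simp add: algebra_simps)

lemma polarLine_alt: "polarLine l = {Q \<in> points. \<forall>v. v \<noteq> 0 \<and> pt v \<in> l \<longrightarrow> Q \<in> polP v}"
  by (simp add: polarLine_def polP_def)

lemma polar_act: "a*d-b*c \<noteq> 0 \<Longrightarrow> l \<subseteq> points \<Longrightarrow>
   polarLine (actLine (gmat a b c d) l) = actLine (gmat a b c d) (polarLine (l::('a::field^4) set set))"
proof (rule set_eqI)
  fix Q assume D: "a*d-b*c \<noteq> 0" and l: "l \<subseteq> points"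
  let ?M = "gmat a b c d"
  show "Q \<in> polarLine (actLine ?M l) \<longleftrightarrow> Q \<in> actLine ?M (polarLine l)"
  proof
    assume Q: "Q \<in> polarLine (actLine ?M l)"
    then obtain u where u: "u \<noteq> 0" "Q = pt u" by (auto simp: polarLine_alt elim: pointsE)
    let ?w = "u v* gmat d (-b) (-c) a"
    have w0: "?w \<noteq> 0" using u D fv_nonzero' by blast
    have "pt ?w \<in> polarLine l" unfolding polarLine_alt
    proof (intro CollectI conjI allI impI)
      show "pt ?w \<in> points" using w0 by simp
      fix v assume v: "v \<noteq> 0 \<and> pt v \<in> l"
      have "pt (v v* ?M) \<in> actLine ?M l" using v by (auto simp: actLine_def actPoint_pt[symmetric])
      moreover have "v v* ?M \<noteq> 0" using fv_nonzero[OF D] v by blast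
      ultimately have "Q \<in> polP (v v* ?M)" using Q by (auto simp: polarLine_alt)
      then have o: "omega (v v* ?M) u = 0" using u pt_in_polP by blast
      have "(a*d-b*c)^3 * omega v ?w = omega (v v* ?M) (?w v* ?M)" by (simp add: omega_gmat)
      also have "\<dots> = omega (v v* ?M) ((a*d-b*c)^3 *s u)" by (simp add: gmat_inv')
      also have "\<dots> = 0" using o by (simp add: omega_def dot4_smult)
      finally have "omega v ?w = 0" using D by simp
      then show "pt ?w \<in> polP v" using w0 pt_in_polP by blast
    qed
    moreover have "actPoint ?M (pt ?w) = Q" using u D by (simp add: actPoint_pt gmat_inv' pt_smult)
    ultimately show "Q \<in> actLine ?M (polarLine l)" unfolding actLine_def by (metis image_eqI)
  next
    assume "Q \<in> actLine ?M (polarLine l)"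
    then obtain P where P: "P \<in> polarLine l" "Q = actPoint ?M P" by (auto simp: actLine_def)
    then obtain u where u: "u \<noteq> 0" "P = pt u" by (auto simp: polarLine_alt elim: pointsE)
    have fu: "u v* ?M \<noteq> 0" using fv_nonzero[OF D] u by blast
    show "Q \<in> polarLine (actLine ?M l)" unfolding polarLine_alt
    proof (intro CollectI conjI allI impI)
      show "Q \<in> points" using P u fu by (simp add: actPoint_pt)
      fix v' assume v': "v' \<noteq> 0 \<and> pt v' \<in> actLine ?M l"
      then obtain R where R: "R \<in> l" "pt v' = actPoint ?M R" by (auto simp: actLine_def)
      have "R \<in> points" using R l by blast
      then obtain v where v: "v \<noteq> 0" "R = pt v" by (rule pointsE)
      have "pt v' = pt (v v* ?M)" using R v by (simp add: actPoint_pt)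
      then obtain k where k: "k \<noteq> 0" "v' = k *s (v v* ?M)" using pt_eq by blast
      have "P \<in> polP v" using P(1) v R by (auto simp: polarLine_alt)
      then have "omega v u = 0" using u pt_in_polP by blast
      then have "omega v' (u v* ?M) = 0"
        by (simp add: k omega_def sigcoef_smult dot4_smult_l omega_gmat[unfolded omega_def])
      then show "Q \<in> polP v'" using P u fu by (simp add: actPoint_pt pt_in_polP)
    qed
  qed
qed



lemma Ccurve_points: "Ccurve \<subseteq> (points::('a::field^4) set set)"
  by (auto simp: Ccurve_def Cvec_def split: option.splits)

lemma osc_points: "oscPlane t \<subseteq> (points::('a::field^4) set set)"
  by (simp add: osc_polP polP_subset)

lemma tan_points: "tangentLine t \<subseteq> (points::('a::field^4) set set)"
  by (simp add: tangent_CD line_subset_points indep_CD)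

lemma osc_planes: "oscPlane t \<in> (planes::('a::field^4) set set set)"
  by (cases t) (auto simp: oscPlane_def planes_def)

locale psym =
  fixes f g :: "('a::{finite,field}^4) set \<Rightarrow> ('a^4) set"
  assumes fp: "P \<in> points \<Longrightarrow> f P \<in> points"
    and gp: "P \<in> points \<Longrightarrow> g P \<in> points"
    and gf: "P \<in> points \<Longrightarrow> g (f P) = P"
    and fg: "P \<in> points \<Longrightarrow> f (g P) = P"
    and fC: "P \<in> Ccurve \<Longrightarrow> f P \<in> Ccurve"
    and gC: "P \<in> Ccurve \<Longrightarrow> g P \<in> Ccurve"
    and fosc: "\<exists>t'. f ` oscPlane t = oscPlane t'"
    and gosc: "\<exists>t'. g ` oscPlane t = oscPlane t'"
    and ftan: "\<exists>t'. f ` tangentLine t = tangentLine t'"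
    and gtan: "\<exists>t'. g ` tangentLine t = tangentLine t'"
    and fpl: "H \<in> planes \<Longrightarrow> f ` H \<in> planes"
    and gpl: "H \<in> planes \<Longrightarrow> g ` H \<in> planes"
    and osc_inj: "oscPlane t = oscPlane t' \<Longrightarrow> t = t'"
begin

lemma sym: "psym g f"
  by unfold_locales (erule gp | erule fp | erule fg | erule gf | erule gC | erule fC | rule gosc | rule fosc
     | rule gtan | rule ftan | erule gpl | erule fpl | erule osc_inj)+

lemma inj_f: "inj_on f points"
  by (metis gf inj_onI)

lemma gf_set: "X \<subseteq> points \<Longrightarrow> g ` f ` X = X"
proof -
  assume X: "X \<subseteq> points"
  have "g ` f ` X = (\<lambda>P. g (f P)) ` X" by (simp add: image_image)
  also have "\<dots> = X" using X gf by (simp add: subset_iff)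
  finally show ?thesis .
qed

lemma fC_iff: "P \<in> points \<Longrightarrow> f P \<in> Ccurve \<longleftrightarrow> P \<in> Ccurve"
  using fC gC gf by metis

lemma card_osc_le: "P \<in> points \<Longrightarrow> nOsc P \<le> nOsc (f P)"
proof -
  assume P: "P \<in> points"
  define \<sigma> where "\<sigma> t = (SOME t'. f ` oscPlane t = oscPlane t')" for t
  have s: "f ` oscPlane t = oscPlane (\<sigma> t)" for t
    unfolding \<sigma>_def using fosc by (rule someI_ex)
  have "inj_on \<sigma> {t. P \<in> oscPlane t}"
  proof (rule inj_onI)
    fix t1 t2 assume "\<sigma> t1 = \<sigma> t2"
    then have "g ` f ` oscPlane t1 = g ` f ` oscPlane t2" using s by metis
    then have "oscPlane t1 = oscPlane t2" using gf_set osc_points by metis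
    then show "t1 = t2" by (rule osc_inj)
  qed
  moreover have "\<sigma> ` {t. P \<in> oscPlane t} \<subseteq> {t. f P \<in> oscPlane t}"
    using s by blast
  ultimately show ?thesis unfolding nOsc_def
    by (metis card_inj_on_le finite)
qed

lemma nOsc_f: "P \<in> points \<Longrightarrow> nOsc (f P) = nOsc P"
  using card_osc_le psym.card_osc_le[OF sym, of "f P"] fp gf
  by (metis le_antisym)

lemma tan_f: "P \<in> points \<Longrightarrow> (\<exists>t. f P \<in> tangentLine t) \<longleftrightarrow> (\<exists>t. P \<in> tangentLine t)"
proof
  assume P: "P \<in> points" and "\<exists>t. f P \<in> tangentLine t"
  then obtain t where "f P \<in> tangentLine t" by blast
  then have "g (f P) \<in> g ` tangentLine t" by blast
  then show "\<exists>t. P \<in> tangentLine t" using gtan gf P by metis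
next
  assume P: "P \<in> points" and "\<exists>t. P \<in> tangentLine t"
  then obtain t where "P \<in> tangentLine t" by blast
  then have "f P \<in> f ` tangentLine t" by blast
  then show "\<exists>t. f P \<in> tangentLine t" using ftan by metis
qed

lemma class_f:
  assumes P: "P \<in> points"
  shows "f P \<in> P1 \<longleftrightarrow> P \<in> P1" "f P \<in> P2 \<longleftrightarrow> P \<in> P2" "f P \<in> P3 \<longleftrightarrow> P \<in> P3"
        "f P \<in> P4 \<longleftrightarrow> P \<in> P4" "f P \<in> P5 \<longleftrightarrow> P \<in> P5"
  using P fp fC_iff nOsc_f tan_f by (auto simp: P1_def P2_def P3_def P4_def P5_def)

lemma image_inter:
  assumes l: "l \<subseteq> points" and X: "\<And>P. P \<in> points \<Longrightarrow> f P \<in> X \<longleftrightarrow> P \<in> X"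
  shows "card (f ` l \<inter> X) = card (l \<inter> X)"
proof -
  have "f ` l \<inter> X = f ` (l \<inter> X)" using l X by auto
  moreover have "inj_on f (l \<inter> X)" using inj_f l by (meson inf.coboundedI1 inj_on_subset)
  ultimately show ?thesis by (simp add: card_image)
qed

lemma OD0_f: "l \<subseteq> points \<Longrightarrow> OD0 (f ` l) = OD0 l"
  unfolding OD0_def using image_inter class_f by simp

lemma card_C_f: "l \<subseteq> points \<Longrightarrow> card (f ` l \<inter> Ccurve) = card (l \<inter> Ccurve)"
  using image_inter fC_iff by blast

lemma H1_f: "H \<in> planes \<Longrightarrow> f ` H \<in> H1 \<longleftrightarrow> H \<in> H1"
proof
  assume H: "H \<in> planes" and "f ` H \<in> H1"
  then obtain t where "f ` H = oscPlane t" by (auto simp: H1_def)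
  then have "g ` f ` H = g ` oscPlane t" by simp
  moreover have "H \<subseteq> points" using H by (auto simp: planes_def dest: subsetD[OF plane_subset_points])
  ultimately show "H \<in> H1" using gf_set gosc by (metis H1_def rangeI)
next
  assume "H \<in> H1"
  then obtain t where t: "H = oscPlane t" by (auto simp: H1_def)
  obtain t' where "f ` oscPlane t = oscPlane t'" using fosc by blast
  then show "f ` H \<in> H1" using t by (simp add: H1_def)
qed

lemma planes_points: "H \<in> planes \<Longrightarrow> H \<subseteq> points"
  by (auto simp: planes_def dest: subsetD[OF plane_subset_points])

lemma Hclass_f:
  assumes H: "H \<in> planes"
  shows "f ` H \<in> H1 \<longleftrightarrow> H \<in> H1" "f ` H \<in> H2 \<longleftrightarrow> H \<in> H2" "f ` H \<in> H3 \<longleftrightarrow> H \<in> H3"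
        "f ` H \<in> H4 \<longleftrightarrow> H \<in> H4" "f ` H \<in> H5 \<longleftrightarrow> H \<in> H5"
proof -
  have c: "card (f ` H \<inter> Ccurve) = card (H \<inter> Ccurve)" using card_C_f planes_points H by blast
  have e: "f ` H \<inter> Ccurve = {} \<longleftrightarrow> H \<inter> Ccurve = {}"
    using H planes_points fC_iff by blast
  show "f ` H \<in> H1 \<longleftrightarrow> H \<in> H1" using H1_f H .
  show "f ` H \<in> H2 \<longleftrightarrow> H \<in> H2" using c H fpl by (auto simp: H2_def)
  show "f ` H \<in> H3 \<longleftrightarrow> H \<in> H3" using c H fpl by (auto simp: H3_def)
  show "f ` H \<in> H4 \<longleftrightarrow> H \<in> H4" using c H fpl H1_f[OF H] by (auto simp: H4_def)
  show "f ` H \<in> H5 \<longleftrightarrow> H \<in> H5" using e H fpl by (auto simp: H5_def)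
qed

lemma Hcount:
  assumes l: "l \<subseteq> points" and Xp: "X \<subseteq> planes"
    and X: "\<And>H. H \<in> planes \<Longrightarrow> f ` H \<in> X \<longleftrightarrow> H \<in> X"
  shows "card {H \<in> X. f ` l \<subseteq> H} = card {H \<in> X. l \<subseteq> H}"
proof -
  have "{H \<in> X. f ` l \<subseteq> H} = (\<lambda>H. f ` H) ` {H \<in> X. l \<subseteq> H}"
  proof (rule set_eqI, rule iffI)
    fix H assume H: "H \<in> {H \<in> X. f ` l \<subseteq> H}"
    then have Hp: "H \<in> planes" "H \<subseteq> points" using Xp planes_points by auto
    let ?H = "g ` H"
    have "?H \<in> planes" using gpl Hp by blast
    moreover have fH: "f ` ?H = H"
    proof -
      have "f ` g ` H = (\<lambda>P. f (g P)) ` H" by (simp add: image_image)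
      also have "\<dots> = H" using Hp(2) fg by (simp add: subset_iff)
      finally show ?thesis .
    qed
    ultimately have "?H \<in> X" using X[of ?H] H by simp
    moreover have "g ` f ` l \<subseteq> ?H" using H by blast
    then have "l \<subseteq> ?H" using gf_set[OF l] by simp
    ultimately show "H \<in> (\<lambda>H. f ` H) ` {H \<in> X. l \<subseteq> H}" using fH by blast
  next
    fix H assume "H \<in> (\<lambda>H. f ` H) ` {H \<in> X. l \<subseteq> H}"
    then obtain H' where "H' \<in> X" "l \<subseteq> H'" "H = f ` H'" by blast
    then show "H \<in> {H \<in> X. f ` l \<subseteq> H}" using X Xp by auto
  qed
  moreover have "inj_on (\<lambda>H. f ` H) {H \<in> X. l \<subseteq> H}"
  proof (rule inj_onI)
    fix A B assume "A \<in> {H \<in> X. l \<subseteq> H}" "B \<in> {H \<in> X. l \<subseteq> H}" "f ` A = f ` B"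
    moreover then have "A \<in> planes" "B \<in> planes" using Xp by auto
    then have "A \<subseteq> points" "B \<subseteq> points" using planes_points by auto
    ultimately show "A = B" using gf_set by metis
  qed
  ultimately show ?thesis by (simp add: card_image)
qed

lemma H1_planes: "H1 \<subseteq> planes"
  by (auto simp: H1_def osc_planes)

lemma OD2_f:
  assumes l: "l \<subseteq> points"
  shows "OD2 (f ` l) = OD2 l"
proof -
  have "card {H \<in> H1. f ` l \<subseteq> H} = card {H \<in> H1. l \<subseteq> H}"
    by (rule Hcount[OF l H1_planes]) (rule Hclass_f(1))
  moreover have "card {H \<in> H2. f ` l \<subseteq> H} = card {H \<in> H2. l \<subseteq> H}"
    by (rule Hcount[OF l _ Hclass_f(2)]) (auto simp: H2_def)
  moreover have "card {H \<in> H3. f ` l \<subseteq> H} = card {H \<in> H3. l \<subseteq> H}"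
    by (rule Hcount[OF l _ Hclass_f(3)]) (auto simp: H3_def)
  moreover have "card {H \<in> H4. f ` l \<subseteq> H} = card {H \<in> H4. l \<subseteq> H}"
    by (rule Hcount[OF l _ Hclass_f(4)]) (auto simp: H4_def)
  moreover have "card {H \<in> H5. f ` l \<subseteq> H} = card {H \<in> H5. l \<subseteq> H}"
    by (rule Hcount[OF l _ Hclass_f(5)]) (auto simp: H5_def)
  ultimately show ?thesis by (simp add: OD2_def)
qed

lemma osc_f: "l \<subseteq> points \<Longrightarrow> (\<exists>t. f ` l \<subseteq> oscPlane t) \<Longrightarrow> (\<exists>t. l \<subseteq> oscPlane t)"
proof -
  assume l: "l \<subseteq> points" and "\<exists>t. f ` l \<subseteq> oscPlane t"
  then obtain t where "f ` l \<subseteq> oscPlane t" by blast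
  then have "g ` f ` l \<subseteq> g ` oscPlane t" by blast
  then show ?thesis using gf_set[OF l] gosc by metis
qed

end



lemma omega_Cvec: "omega (Cvec t') (Cvec t) = (case (t', t) of
    (Some s', Some s) \<Rightarrow> (s - s')^3 | (None, Some s) \<Rightarrow> -1 | (Some s', None) \<Rightarrow> 1 | (None, None) \<Rightarrow> (0::'a::field))"
  by (cases t; cases t') (simp_all add: omega_expl Cvec_def power2_eq_square power3_eq_cube algebra_simps)

lemma Cvec_nonzero: "Cvec t \<noteq> (0::'a::field^4)"
  by (cases t) (simp_all add: Cvec_def)

lemma C_in_osc: "pt (Cvec t) \<in> oscPlane t' \<longleftrightarrow> t = (t'::'a::field option)"
  by (cases t; cases t') (simp_all add: osc_polP pt_in_polP Cvec_nonzero omega_Cvec)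

lemma osc_inj: "oscPlane t = oscPlane t' \<Longrightarrow> t = (t'::'a::field option)"
  using C_in_osc by metis

lemma Cpt_inj: "pt (Cvec t) = pt (Cvec t') \<Longrightarrow> t = (t'::'a::field option)"
  using C_in_osc by metis

lemma psym_act: "(3::'a::{finite,field}) \<noteq> 0 \<Longrightarrow> a*d-b*c \<noteq> 0 \<Longrightarrow>
  psym (actPoint (gmat a b c d)) (actPoint (gmat d (-b) (-c) (a::'a)))"
proof -
  assume 3: "(3::'a) \<noteq> 0" and D: "a*d-b*c \<noteq> 0"
  show ?thesis
    by unfold_locales (rule act_points[OF D] act_points'[OF D] act_inv[OF D] act_inv'[OF D] act_C[OF D] act_C'[OF D]
       act_osc[OF D] act_osc'[OF D] act_tan[OF D] act_tan'[OF D] act_planes[OF 3 D] act_planes'[OF 3 D] osc_inj; assumption)+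
qed


lemma line_mem1: "pt u \<in> line u (v::'a::field^4)"
  unfolding line_def by (rule CollectI, rule exI[of _ 1], rule exI[of _ 0]) simp

lemma line_mem2: "pt v \<in> line u (v::'a::field^4)"
  unfolding line_def by (rule CollectI, rule exI[of _ 0], rule exI[of _ 1]) simp

definition m0 :: "('a::field^4) set set" where
  "m0 = line (v4 3 1 0 0) (v4 0 0 0 1)"

lemma indep_m0: "indep2 (v4 3 1 0 0) (v4 0 0 0 (1::'a::field))"
  unfolding indep2_def by simp

lemma indep_line0: "indep2 (v4 0 1 0 0) (v4 0 0 1 (1::'a::field))"
  unfolding indep2_def by simp

lemma m0_points: "m0 \<subseteq> (points::('a::field^4) set set)"
  unfolding m0_def by (rule line_subset_points[OF indep_m0])

lemma line0_points: "line0 \<subseteq> (points::('a::field^4) set set)"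
  unfolding line0_def by (rule line_subset_points[OF indep_line0])

lemma polar_line0: "(3::'a::field) \<noteq> 0 \<Longrightarrow> polarLine line0 = (m0::('a^4) set set)"
proof (rule set_eqI)
  fix Q assume 3: "(3::'a) \<noteq> 0"
  show "Q \<in> polarLine line0 \<longleftrightarrow> Q \<in> (m0::('a^4) set set)"
  proof
    assume Q: "Q \<in> polarLine line0"
    then obtain u where u: "u \<noteq> 0" "Q = pt (u::'a^4)" by (auto simp: polarLine_alt elim: pointsE)
    have "\<forall>v. v \<noteq> 0 \<and> pt v \<in> line0 \<longrightarrow> Q \<in> polP v" using Q by (simp add: polarLine_alt)
    moreover have "pt (v4 0 1 0 0) \<in> (line0::('a^4) set set)" "pt (v4 0 0 1 1) \<in> (line0::('a^4) set set)"
      unfolding line0_def by (rule line_mem1, rule line_mem2)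
    ultimately have "Q \<in> polP (v4 0 1 0 0)" "Q \<in> polP (v4 0 0 1 1)" by auto
    then have "omega (v4 0 1 0 (0::'a)) u = 0" "omega (v4 0 0 1 (1::'a)) u = 0" using u pt_in_polP by auto
    then have e: "u$2 = 0" "u$0 = 3 * u$1" using 3 by (auto simp: omega_expl)
    have "u = (u$1) *s v4 3 1 0 0 + (u$3) *s v4 0 0 0 1"
      using e by (subst v4_expand[of u]) (simp add: algebra_simps)
    then show "Q \<in> m0" unfolding m0_def using u pt_in_line[OF indep_m0] by blast
  next
    assume Q: "Q \<in> (m0::('a^4) set set)"
    then obtain u where u: "u \<noteq> 0" "Q = pt (u::'a^4)" using m0_points by (blast elim: pointsE)
    then obtain x y where xy: "u = x *s v4 3 1 0 0 + y *s v4 0 0 0 1"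
      using Q pt_in_line[OF indep_m0] unfolding m0_def by blast
    show "Q \<in> polarLine line0" unfolding polarLine_alt
    proof (intro CollectI conjI allI impI)
      show "Q \<in> points" using u by simp
      fix v :: "'a^4" assume v: "v \<noteq> 0 \<and> pt v \<in> line0"
      then obtain a b where "v = a *s v4 0 1 0 0 + b *s v4 0 0 1 1"
        using pt_in_line[OF indep_line0] unfolding line0_def by blast
      then have "omega v u = 0" using xy by (simp add: omega_expl algebra_simps)
      then show "Q \<in> polP v" using u pt_in_polP by blast
    qed
  qed
qed

lemma gmat_id: "v v* gmat 1 0 0 1 = (v::'a::field^4)"
  by (simp add: vm_gmat vec_eq4)

lemma act_id: "actPoint (gmat 1 0 0 1) P = (P::('a::field^4) set)"
  by (simp add: actPoint_def gmat_id)

lemma L7_eq: "(3::'a::field) \<noteq> 0 \<Longrightarrow> polarLine ` Gorbit line0 = Gorbit (m0::('a^4) set set)"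
proof -
  assume 3: "(3::'a) \<noteq> 0"
  have "polarLine (actLine M line0) = actLine M (m0::('a^4) set set)" if "M \<in> Gmats" for M
  proof -
    from that obtain a b c d where M: "M = gmat a b c d" "a*d-b*c \<noteq> (0::'a)" by (auto simp: Gmats_def)
    then show ?thesis using polar_act[OF M(2) line0_points] polar_line0[OF 3] by simp
  qed
  then show ?thesis unfolding Gorbit_def by (auto simp: image_iff)
qed

lemma m0_in_orbit: "(m0::('a::field^4) set set) \<in> Gorbit m0"
proof -
  have "gmat 1 0 0 1 \<in> (Gmats::('a^4^4) set)" unfolding Gmats_def by force
  moreover have "actLine (gmat 1 0 0 1) m0 = (m0::('a^4) set set)" by (simp add: actLine_def act_id)
  ultimately show ?thesis unfolding Gorbit_def by force
qed



definition cub :: "'a::field \<Rightarrow> 'a" where "cub u = u^3 - u^2"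
lemma nz: "(3::'a::field) \<noteq> 0 \<Longrightarrow> (9::'a) \<noteq> 0 \<and> (27::'a) \<noteq> 0"
proof -
  assume h: "(3::'a) \<noteq> 0"
  have "(9::'a) = 3 * 3" "(27::'a) = 3 * 3 * 3" by simp_all
  then show ?thesis using h by (metis mult_eq_0_iff)
qed

definition K :: "'a::{finite,field} \<Rightarrow> nat" where "K r = card {u. cub u = r}"

lemma cub27: "27 * cub x = (3*x)^3 - 3*(3*x)^2"
  unfolding cub_def by algebra

lemma cub_val: "(3::'a::field) \<noteq> 0 \<Longrightarrow> 3 * x = (c::'a) \<Longrightarrow> cub x = (c^3 - 3*c^2) / 27"
proof -
  assume h: "(3::'a) \<noteq> 0" and x: "3 * x = c"
  have "27 * cub x = c^3 - 3*c^2" using cub27[of x] x by simp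
  then show ?thesis using nz[OF h] by (simp add: eq_divide_eq mult.commute)
qed

lemma fib3:
  assumes "cub t1 = r" "cub t2 = r" "t1 \<noteq> (t2::'a::field)"
  shows "{u. cub u = r} = {t1, t2, 1 - t1 - t2}"
proof -
  define Q where "Q = t1^2 + t1*t2 + t2^2 - t1 - t2"
  have "(t1 - t2) * Q = cub t1 - cub t2" by (simp add: Q_def cub_def) algebra
  then have Q0: "Q = 0" using assms by simp
  have id: "(u-t1)*(u-t2)*(u-(1-t1-t2)) = cub u - r - Q*u + t1*Q + (r - cub t1)" for u
    by (simp add: Q_def cub_def) algebra
  have "cub u = r \<longleftrightarrow> (u-t1)*(u-t2)*(u-(1-t1-t2)) = 0" for u
    using id[of u] Q0 assms(1) by simp
  then show ?thesis by auto
qed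

lemma Q_of:
  assumes "cub t1 = cub t2" "t1 \<noteq> (t2::'a::field)"
  shows "t1^2 + t1*t2 + t2^2 - t1 - t2 = 0"
proof -
  have "(t1 - t2) * (t1^2 + t1*t2 + t2^2 - t1 - t2) = cub t1 - cub t2" by (simp add: cub_def) algebra
  then show ?thesis using assms by simp
qed

lemma double_root:
  assumes h3: "(3::'a::field) \<noteq> 0" and "cub t1 = r" "cub t2 = r" "t1 \<noteq> (t2::'a)" "1 - t1 - t2 = t1"
  shows "r = 0 \<or> r = -4/27"
proof -
  have Q: "t1^2 + t1*t2 + t2^2 - t1 - t2 = 0" using Q_of assms by metis
  have t2: "t2 = 1 - 2*t1" using assms(5) by (simp add: algebra_simps)
  have "t1 * (3*t1 - 2) = 0" using Q unfolding t2 by (simp add: algebra_simps power2_eq_square)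
  then have "t1 = 0 \<or> t1 = 2/3" using h3 by (auto simp: field_simps)
  then show ?thesis
  proof
    assume "t1 = 0" then show ?thesis using assms(2) by (simp add: cub_def)
  next
    assume a: "t1 = 2/3"
    have "3 * t1 = 2" unfolding a using h3 by simp
    then have "cub t1 = (2^3 - 3*2^2) / 27" using cub_val[OF h3] by blast
    then show ?thesis using assms(2) by simp
  qed
qed

lemma K_cases:
  assumes h3: "(3::'a::{finite,field}) \<noteq> 0"
  shows "K r = 0 \<or> K r = 1 \<or> K r = 3 \<or> (K r = 2 \<and> (r = 0 \<or> r = (-4/27::'a)))"
proof (cases "\<exists>t. cub t = r")
  case False then show ?thesis by (simp add: K_def)
next
  case True
  then obtain t1 where t1: "cub t1 = r" by blast
  show ?thesis
  proof (cases "\<exists>t2. cub t2 = r \<and> t2 \<noteq> t1")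
    case False
    have "{u. cub u = r} = {t1}" using False t1 by blast
    then show ?thesis by (simp add: K_def)
  next
    case True
    then obtain t2 where t2: "cub t2 = r" "t2 \<noteq> t1" by blast
    have ne: "t1 \<noteq> t2" using t2(2) by simp
    have S: "{u. cub u = r} = {t1, t2, 1 - t1 - t2}" by (rule fib3[OF t1 t2(1) ne])
    show ?thesis
    proof (cases "1 - t1 - t2 = t1")
      case True
      then have "r = 0 \<or> r = -4/27" by (rule double_root[OF h3 t1 t2(1) ne])
      moreover have "{u. cub u = r} = {t1, t2}" using S True by auto
      ultimately show ?thesis using ne by (simp add: K_def)
    next
      case F1: False
      show ?thesis
      proof (cases "1 - t1 - t2 = t2")
        case True
        then have "1 - t2 - t1 = t2" by (simp add: algebra_simps)
        then have "r = 0 \<or> r = -4/27" by (rule double_root[OF h3 t2(1) t1 t2(2)])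
        moreover have "{u. cub u = r} = {t1, t2}" using S True by auto
        ultimately show ?thesis using ne by (simp add: K_def)
      next
        case False
        then have "card {t1, t2, 1 - t1 - t2} = 3" using F1 ne by simp
        then show ?thesis using S by (simp add: K_def)
      qed
    qed
  qed
qed

lemma K_special:
  assumes h3: "(3::'a::{finite,field}) \<noteq> 0"
  shows "K (0::'a) = 2" "K (-4/27::'a) = 2"
proof -
  have "{u. cub u = (0::'a)} = {0, 1, 1 - 0 - 1}"
    by (rule fib3) (simp_all add: cub_def)
  moreover have "{0, 1, 1 - 0 - 1} = {0, (1::'a)}" by auto
  ultimately show "K (0::'a) = 2" by (simp add: K_def)
  have t23: "3 * (2/3::'a) = 2" and tm: "3 * (-1/3::'a) = -1" using h3 by simp_all
  have c1: "cub (2/3::'a) = (2^3 - 3*2^2)/27" by (rule cub_val[OF h3 t23])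
  have c2: "cub (-1/3::'a) = ((-1)^3 - 3*(-1)^2)/27" by (rule cub_val[OF h3 tm])
  have a1: "cub (2/3::'a) = -4/27" using c1 by simp
  have a2: "cub (-1/3::'a) = -4/27" using c2 by simp
  have d: "2/3 - (-1/3) = (1::'a)" using h3 by (simp add: field_simps)
  have a3: "(2/3::'a) \<noteq> -1/3"
  proof
    assume eq: "(2/3::'a) = -1/3"
    show False using d unfolding eq by simp
  qed
  have t3: "1 - 2/3 - (-1/3) = (2/3::'a)" using h3 by (simp add: field_simps)
  have "{u. cub u = (-4/27::'a)} = {2/3, -1/3, 1 - 2/3 - (-1/3)}"
    by (rule fib3[OF a1 a2 a3])
  also have "\<dots> = {2/3, -1/3}" unfolding t3 by auto
  finally have "{u. cub u = (-4/27::'a)} = {2/3, -1/3}" .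
  then show "K (-4/27::'a) = 2" using a3 by (simp add: K_def)
qed

lemma sum_K: "(\<Sum>r\<in>UNIV. K (r::'a::{finite,field})) = CARD('a)"
proof -
  have "(\<Sum>r\<in>UNIV. K (r::'a)) = (\<Sum>r\<in>UNIV. \<Sum>x\<in>{x\<in>UNIV. cub x = (r::'a)}. (1::nat))"
    by (simp add: K_def)
  also have "\<dots> = (\<Sum>x\<in>(UNIV::'a set). 1)" by (rule sum.group) auto
  finally show ?thesis by simp
qed

lemma sum_K2: "(\<Sum>r\<in>UNIV. K (r::'a::{finite,field}) * (K r - 1)) = card {(t,u). t \<noteq> u \<and> cub t = cub (u::'a)}"
proof -
  have "{(t,u). t \<noteq> u \<and> cub t = cub (u::'a)} = (SIGMA t:(UNIV::'a set). {u. cub u = cub t} - {t})" by auto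
  then have "card {(t,u). t \<noteq> u \<and> cub t = cub (u::'a)} = (\<Sum>t\<in>(UNIV::'a set). card ({u. cub u = cub t} - {t}))"
    by simp
  also have "\<dots> = (\<Sum>t\<in>UNIV. K (cub (t::'a)) - 1)" by (simp add: K_def card_Diff_singleton)
  also have "\<dots> = (\<Sum>r\<in>UNIV. \<Sum>t\<in>{t\<in>UNIV. cub t = (r::'a)}. K (cub t) - 1)"
    by (rule sum.group[symmetric]) auto
  also have "\<dots> = (\<Sum>r\<in>UNIV. K (r::'a) * (K r - 1))" by (rule sum.cong) (simp_all add: K_def)
  finally show ?thesis by simp
qed


definition Nm :: "'a::field \<Rightarrow> 'a" where "Nm m = m^2 + m + 1"
definition Pm :: "'a::field \<Rightarrow> 'a \<times> 'a" where "Pm m = ((1+m)/Nm m, m*(1+m)/Nm m)"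

lemma cub_diff_m: "cub t - cub (m*t) = (t - m*t) * t * (t * Nm m - (1 + m))"
  unfolding cub_def Nm_def by algebra

lemma S_param:
  assumes h2: "(2::'a::field) \<noteq> 0" and h3: "(3::'a) \<noteq> 0"
  shows "{(t,u). t \<noteq> u \<and> cub t = cub (u::'a)} = insert (0,1) (Pm ` {m. m \<noteq> 1 \<and> m \<noteq> -1 \<and> Nm m \<noteq> 0})"
proof (rule set_eqI, rule iffI)
  fix p :: "'a \<times> 'a" assume "p \<in> {(t,u). t \<noteq> u \<and> cub t = cub (u::'a)}"
  then obtain t u where p: "p = (t,u)" "t \<noteq> u" "cub t = cub u" by auto
  have Q: "t^2 + t*u + u^2 - t - u = 0" using Q_of p by metis
  show "p \<in> insert (0,1) (Pm ` {m. m \<noteq> 1 \<and> m \<noteq> -1 \<and> Nm m \<noteq> 0})"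
  proof (cases "t = 0")
    case True
    then have "u * (u - 1) = 0" using Q by (simp add: algebra_simps power2_eq_square)
    then have "u = 1" using p True by auto
    then show ?thesis using p True by simp
  next
    case False
    define m where "m = u / t"
    have u: "u = m * t" using False by (simp add: m_def)
    have "t * (t * Nm m - (1 + m)) = 0" using Q unfolding u Nm_def by (simp add: algebra_simps power2_eq_square)
    then have e: "t * Nm m = 1 + m" using False by simp
    have N: "Nm m \<noteq> 0"
    proof
      assume "Nm m = 0"
      then have "m = -1" using e by (simp add: algebra_simps add_eq_0_iff)
      then show False using \<open>Nm m = 0\<close> by (simp add: Nm_def)
    qed
    have m1: "m \<noteq> 1" using p(2) u by auto
    have m2: "m \<noteq> -1" using e False N by auto
    have t: "t = (1+m) / Nm m" using e N by (simp add: field_simps)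
    have "p = Pm m" using p t u N by (simp add: Pm_def)
    then show ?thesis using m1 m2 N by blast
  qed
next
  fix p :: "'a \<times> 'a" assume "p \<in> insert (0,1) (Pm ` {m. m \<noteq> 1 \<and> m \<noteq> -1 \<and> Nm m \<noteq> 0})"
  then show "p \<in> {(t,u). t \<noteq> u \<and> cub t = cub (u::'a)}"
  proof
    assume "p = (0,1)" then show ?thesis by (simp add: cub_def)
  next
    assume "p \<in> Pm ` {m. m \<noteq> 1 \<and> m \<noteq> -1 \<and> Nm m \<noteq> 0}"
    then obtain m where m: "m \<noteq> 1" "m \<noteq> -1" "Nm m \<noteq> 0" "p = Pm m" by blast
    define t where "t = (1+m)/Nm m"
    have t0: "t \<noteq> 0" using m by (simp add: t_def add_eq_0_iff)
    have p: "p = (t, m*t)" using m by (simp add: Pm_def t_def)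
    have "t * Nm m - (1 + m) = 0" using m by (simp add: t_def)
    then have "cub t = cub (m*t)" using cub_diff_m[of t m] by simp
    moreover have "t \<noteq> m * t" using t0 m(1) by simp
    ultimately show ?thesis using p by simp
  qed
qed

lemma Pm_inj: "inj_on Pm {m. m \<noteq> 1 \<and> m \<noteq> -1 \<and> Nm m \<noteq> (0::'a::field)}"
proof (rule inj_onI)
  fix x y :: 'a assume x: "x \<in> {m. m \<noteq> 1 \<and> m \<noteq> -1 \<and> Nm m \<noteq> 0}" and y: "y \<in> {m. m \<noteq> 1 \<and> m \<noteq> -1 \<and> Nm m \<noteq> 0}"
    and e: "Pm x = Pm y"
  have "\<And>m. m \<in> {m. m \<noteq> 1 \<and> m \<noteq> -1 \<and> Nm m \<noteq> (0::'a)} \<Longrightarrow> snd (Pm m) / fst (Pm m) = m"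
    by (auto simp: Pm_def add_eq_0_iff)
  then show "x = y" using x y e by metis
qed

lemma card_S:
  assumes h2: "(2::'a::{finite,field}) \<noteq> 0" and h3: "(3::'a) \<noteq> 0"
  shows "card {(t,u). t \<noteq> u \<and> cub t = cub (u::'a)} + 1 + card {m. Nm m = (0::'a)} = CARD('a)"
proof -
  let ?M = "{m. m \<noteq> 1 \<and> m \<noteq> -1 \<and> Nm m \<noteq> (0::'a)}"
  have "(0,1) \<notin> Pm ` ?M" by (auto simp: Pm_def add_eq_0_iff)
  then have c1: "card {(t,u). t \<noteq> u \<and> cub t = cub (u::'a)} = card ?M + 1"
    using S_param[OF h2 h3] card_image[OF Pm_inj] by simp
  have n1: "Nm (1::'a) \<noteq> 0" "Nm (-1::'a) = 1" using h3 by (simp_all add: Nm_def)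
  have ne: "(1::'a) \<noteq> -1" using h2 by (metis add_eq_0_iff one_add_one)
  have U: "(UNIV::'a set) = ?M \<union> {1, -1} \<union> {m. Nm m = 0}" by auto
  have "CARD('a) = card (?M \<union> {1, -1}) + card {m. Nm m = (0::'a)}"
    unfolding U by (rule card_Un_disjoint) (use n1 in auto)
  also have "card (?M \<union> {1, -1}) = card ?M + 2"
    using ne by (subst card_Un_disjoint) auto
  finally show ?thesis using c1 by simp
qed

lemma card_Nm:
  assumes h2: "(2::'a::{finite,field}) \<noteq> 0"
  shows "card {m. Nm m = (0::'a)} = card {w. w^2 = (-3::'a)}"
proof -
  have "bij_betw (\<lambda>m. 2*m+1) {m. Nm m = (0::'a)} {w. w^2 = (-3::'a)}"
  proof (rule bij_betw_byWitness[where f'="\<lambda>w. (w - 1)/2"])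
    show "\<forall>a\<in>{m. Nm m = (0::'a)}. (2 * a + 1 - 1) / 2 = a" using h2 by simp
    show "\<forall>a'\<in>{w. w\<^sup>2 = (- 3::'a)}. 2 * ((a' - 1) / 2) + 1 = a'" using h2 by (auto simp: field_simps)
    have "(2*m+1)^2 = 4 * Nm m - (3::'a)" for m by (simp add: Nm_def) algebra
    then show "(\<lambda>m. 2 * m + 1) ` {m. Nm m = (0::'a)} \<subseteq> {w. w\<^sup>2 = - 3}" by auto
    have g: "4 * Nm m = (2*m)^2 + 2*(2*m) + (4::'a)" for m unfolding Nm_def by algebra
    have N4: "4 * Nm ((w-1)/2) = w^2 + (3::'a)" for w
    proof -
      have e: "2 * ((w-1)/2) = w - 1" using h2 by simp
      have "4 * Nm ((w-1)/2) = (w-1)^2 + 2*(w-1) + 4" using g[of "(w-1)/2"] by (simp only: e)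
      also have "\<dots> = w^2 + 3" by algebra
      finally show ?thesis .
    qed
    have four: "(4::'a) \<noteq> 0" using h2 by (metis mult_eq_0_iff numeral_Bit0 one_add_one mult_2)
    show "(\<lambda>w. (w - 1) / 2) ` {w. w\<^sup>2 = (- 3::'a)} \<subseteq> {m. Nm m = 0}"
    proof
      fix y assume "y \<in> (\<lambda>w. (w - 1) / 2) ` {w. w\<^sup>2 = (- 3::'a)}"
      then obtain w where w: "w^2 = (-3::'a)" "y = (w-1)/2" by auto
      have "4 * Nm y = 0" unfolding w(2) using N4[of w] w(1) by simp
      then show "y \<in> {m. Nm m = 0}" using four by simp
    qed
  qed
  then show ?thesis by (rule bij_betw_same_card)
qed

lemma card_sqrt:
  assumes h2: "(2::'a::{finite,field}) \<noteq> 0" and c: "c \<noteq> 0"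
  shows "card {w. w^2 = (c::'a)} = (if \<exists>x. x^2 = c then 2 else 0)"
proof (cases "\<exists>x. x^2 = c")
  case True
  then obtain x where x: "x^2 = c" by blast
  have x0: "x \<noteq> 0" using x c by auto
  have "{w. w^2 = c} = {x, -x}"
  proof (rule set_eqI)
    fix w
    have d: "w^2 - x^2 = (w - x) * (w + x)" by algebra
    have "w^2 = c \<longleftrightarrow> w^2 - x^2 = 0" using x by simp
    also have "\<dots> \<longleftrightarrow> (w - x) * (w + x) = 0" by (simp only: d)
    also have "\<dots> \<longleftrightarrow> w = x \<or> w = -x" by (simp add: eq_neg_iff_add_eq_0)
    finally have "w^2 = c \<longleftrightarrow> w = x \<or> w = -x" .
    then show "w \<in> {w. w^2 = c} \<longleftrightarrow> w \<in> {x, -x}" by simp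
  qed
  moreover have "x \<noteq> -x"
  proof
    assume "x = -x"
    then have "x + x = 0" by (simp only: eq_neg_iff_add_eq_0)
    then have "2 * x = 0" by (simp only: mult_2)
    then show False using x0 h2 by simp
  qed
  ultimately show ?thesis using True by simp
next
  case False then show ?thesis by simp
qed

lemma card_squares:
  assumes h2: "(2::'a::{finite,field}) \<noteq> 0"
  shows "2 * card {c. c \<noteq> 0 \<and> (\<exists>x. x^2 = (c::'a))} + 1 = CARD('a)"
proof -
  let ?Q = "{c. c \<noteq> 0 \<and> (\<exists>x. x^2 = (c::'a))}"
  let ?X = "{x::'a. x \<noteq> 0}"
  have "card ?X = (\<Sum>x\<in>?X. (1::nat))" by simp
  also have "\<dots> = (\<Sum>c\<in>?Q. \<Sum>x\<in>{x\<in>?X. x^2 = c}. (1::nat))"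
    by (rule sum.group[symmetric]) auto
  also have "\<dots> = (\<Sum>c\<in>?Q. 2)"
  proof (rule sum.cong[OF refl])
    fix c assume c: "c \<in> ?Q"
    then have "{x\<in>?X. x^2 = c} = {w. w^2 = c}" by auto
    then show "(\<Sum>x\<in>{x\<in>?X. x^2 = c}. (1::nat)) = 2" using card_sqrt[OF h2, of c] c by simp
  qed
  finally have "card ?X = 2 * card ?Q" by simp
  moreover have "card ?X + 1 = CARD('a)"
  proof -
    have "?X = UNIV - {0}" by auto
    then show ?thesis by (simp add: card_Diff_singleton)
  qed
  ultimately show ?thesis by simp
qed


lemma A2_eq:
  assumes h2: "(2::'a::{finite,field}) \<noteq> 0" and h3: "(3::'a) \<noteq> 0"
  shows "card {r::'a. K r = 2} = 2 \<and> {r::'a. K r = 2} = {0, -4/27}"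
proof -
  have "{r::'a. K r = 2} = {0, -4/27}"
    using K_cases[OF h3] K_special[OF h3] by force
  moreover have "(-4/27::'a) \<noteq> 0"
  proof -
    have "(4::'a) \<noteq> 0" using h2 by (metis mult_eq_0_iff numeral_Bit0 one_add_one mult_2)
    moreover have "(27::'a) \<noteq> 0" using nz[OF h3] by simp
    ultimately show ?thesis by simp
  qed
  then have "card {0, -4/27::'a} = 2" by (subst card_insert_disjoint) auto
  ultimately show ?thesis by simp
qed

lemma K_rel:
  assumes h2: "(2::'a::{finite,field}) \<noteq> 0" and h3: "(3::'a) \<noteq> 0"
  shows "card {r::'a. K r = 1} + 3 * card {r::'a. K r = 3} + 4 = CARD('a)"
    "6 * card {r::'a. K r = 3} + 5 + card {w. w^2 = (-3::'a)} = CARD('a)"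
    "card {r::'a. K r = 0} + card {r::'a. K r = 1} + card {r::'a. K r = 3} + 2 = CARD('a)"
proof -
  have A2: "card {r::'a. K r = 2} = 2" by (rule conjunct1[OF A2_eq[OF h2 h3]])
  have kc: "K r = 0 \<or> K r = 1 \<or> K r = 2 \<or> K r = 3" for r :: 'a using K_cases[OF h3, of r] by auto
  have p1: "K r = of_bool (K r = 1) + 3 * of_bool (K r = 3) + 2 * of_bool (K r = 2)" for r :: 'a
    using kc[of r] by auto
  have p2: "K r * (K r - 1) = 6 * of_bool (K r = 3) + 2 * of_bool (K r = 2)" for r :: 'a
    using kc[of r] by auto
  have p3: "(1::nat) = of_bool (K r = 0) + of_bool (K r = 1) + of_bool (K r = 3) + of_bool (K r = 2)" for r :: 'a
    using kc[of r] by auto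
  have "CARD('a) = (\<Sum>r\<in>UNIV. K (r::'a))" using sum_K[where 'a='a] by simp
  also have "\<dots> = (\<Sum>r\<in>UNIV. of_bool (K (r::'a) = 1) + 3 * of_bool (K r = 3) + 2 * of_bool (K r = 2))"
    by (rule sum.cong[OF refl p1])
  also have "\<dots> = card {r::'a. K r = 1} + 3 * card {r::'a. K r = 3} + 2 * card {r::'a. K r = 2}"
    by (simp add: sum.distrib sum_distrib_left[symmetric])
  finally show "card {r::'a. K r = 1} + 3 * card {r::'a. K r = 3} + 4 = CARD('a)" using A2 by simp
  have "card {(t,u). t \<noteq> u \<and> cub t = cub (u::'a)} = (\<Sum>r\<in>UNIV. K (r::'a) * (K r - 1))"
    using sum_K2[where 'a='a] by simp
  also have "\<dots> = (\<Sum>r\<in>UNIV. 6 * of_bool (K (r::'a) = 3) + 2 * of_bool (K r = 2))"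
    by (rule sum.cong[OF refl p2])
  also have "\<dots> = 6 * card {r::'a. K r = 3} + 2 * card {r::'a. K r = 2}"
    by (simp add: sum.distrib sum_distrib_left[symmetric])
  finally have "card {(t,u). t \<noteq> u \<and> cub t = cub (u::'a)} = 6 * card {r::'a. K r = 3} + 4" using A2 by simp
  then show "6 * card {r::'a. K r = 3} + 5 + card {w. w^2 = (-3::'a)} = CARD('a)"
    using card_S[OF h2 h3] card_Nm[OF h2] by simp
  have "CARD('a) = (\<Sum>r\<in>(UNIV::'a set). (1::nat))" by simp
  also have "\<dots> = (\<Sum>r\<in>UNIV. of_bool (K (r::'a) = 0) + of_bool (K r = 1) + of_bool (K r = 3) + of_bool (K r = 2))"
    by (rule sum.cong[OF refl p3])
  also have "\<dots> = card {r::'a. K r = 0} + card {r::'a. K r = 1} + card {r::'a. K r = 3} + card {r::'a. K r = 2}"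
    by (simp add: sum.distrib)
  finally show "card {r::'a. K r = 0} + card {r::'a. K r = 1} + card {r::'a. K r = 3} + 2 = CARD('a)" using A2 by simp
qed



definition Ps :: "'a::field \<Rightarrow> ('a^4) set" where "Ps s = pt (v4 3 1 0 s)"
definition Pinf :: "('a::field^4) set" where "Pinf = pt (v4 0 0 0 1)"

lemma v4_nz1: "v4 3 1 0 s \<noteq> (0::'a::field^4)" by simp

lemma m0_eq: "m0 = insert Pinf (range (Ps::'a::field \<Rightarrow> _))"
proof (rule set_eqI, rule iffI)
  fix P :: "('a^4) set" assume "P \<in> m0"
  then obtain x y where xy: "x \<noteq> 0 \<or> y \<noteq> 0" "P = pt (x *s v4 3 1 0 0 + y *s v4 0 0 0 1)"
    by (auto simp: m0_def line_def)
  show "P \<in> insert Pinf (range Ps)"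
  proof (cases "x = 0")
    case True
    then have P: "P = pt (y *s v4 0 0 0 1)" and y: "y \<noteq> 0" using xy by (auto simp del: v4_smult)
    have "P = Pinf" unfolding P Pinf_def by (rule pt_smult[OF y])
    then show ?thesis by simp
  next
    case False
    then have "x *s v4 3 1 0 0 + y *s v4 0 0 0 1 = x *s v4 3 1 0 (y/x)" by simp
    then have "P = Ps (y/x)" using xy False by (simp add: pt_smult Ps_def del: v4_smult)
    then show ?thesis by simp
  qed
next
  fix P :: "('a^4) set" assume "P \<in> insert Pinf (range Ps)"
  then show "P \<in> m0"
  proof
    assume "P = Pinf" then show ?thesis by (simp add: m0_def Pinf_def line_mem2)
  next
    assume "P \<in> range Ps"
    then obtain s where "P = Ps s" by blast
    moreover have "Ps s \<in> m0" unfolding m0_def line_def Ps_def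
      by (rule CollectI, rule exI[of _ 1], rule exI[of _ s]) simp
    ultimately show ?thesis by simp
  qed
qed

lemma Ps_inj: "inj (Ps::'a::field \<Rightarrow> _)"
proof (rule injI)
  fix s s' :: 'a assume "Ps s = Ps s'"
  then obtain c where "c \<noteq> 0" "v4 3 1 0 s = c *s v4 3 1 0 s'" by (auto simp: Ps_def pt_eq)
  then show "s = s'" by simp
qed

lemma Pinf_not_Ps: "Pinf \<noteq> Ps (s::'a::field)"
proof
  assume "Pinf = Ps s"
  then obtain c where "c \<noteq> 0" "v4 0 0 0 1 = c *s v4 3 1 0 (s::'a)" by (auto simp: Ps_def Pinf_def pt_eq)
  then show False by simp
qed

lemma Pinf_C: "Pinf \<in> (Ccurve::('a::field^4) set set)"
proof -
  have "Pinf = pt (Cvec (None::'a option))" by (simp add: Pinf_def Cvec_def)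
  then show ?thesis by (simp add: Ccurve_def)
qed

lemma Ps_notC: "(3::'a::field) \<noteq> 0 \<Longrightarrow> Ps (s::'a) \<notin> Ccurve"
proof
  assume 3: "(3::'a) \<noteq> 0" and "Ps s \<in> Ccurve"
  then obtain t where "pt (v4 3 1 0 s) = pt (Cvec t)" by (auto simp: Ccurve_def Ps_def)
  then obtain c where c: "c \<noteq> 0" "v4 3 1 0 s = c *s Cvec t" using pt_eq by blast
  show False
  proof (cases t)
    case None then show False using c 3 by (simp add: Cvec_def)
  next
    case (Some u)
    have h1: "(v4 3 1 0 s)$1 = (c *s Cvec t)$1" using c(2) by (rule arg_cong)
    have h2: "(v4 3 1 0 s)$2 = (c *s Cvec t)$2" using c(2) by (rule arg_cong)
    have e1: "c * u = 1" using h1 Some by (simp add: Cvec_def)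
    have e2: "c * u^2 = 0" using h2 Some by (simp add: Cvec_def)
    have "c * u^2 = (c * u) * u" by (simp add: power2_eq_square)
    then have "u = 0" using e1 e2 by simp
    then show False using e1 by simp
  qed
qed

lemma Ps_points: "Ps s \<in> (points::('a::field^4) set set)"
  by (simp add: Ps_def)

lemma Pinf_points: "Pinf \<in> (points::('a::field^4) set set)"
  by (simp add: Pinf_def)

lemma Ps_osc: "(3::'a::field) \<noteq> 0 \<Longrightarrow> {t. Ps s \<in> oscPlane t} = Some ` {u. cub u = (s::'a)/3}"
proof (rule set_eqI)
  fix t :: "'a option" assume 3: "(3::'a) \<noteq> 0"
  show "t \<in> {t. Ps s \<in> oscPlane t} \<longleftrightarrow> t \<in> Some ` {u. cub u = s/3}"
  proof (cases t)
    case None then show ?thesis using 3 by (simp add: Ps_def oscPlane_def pt_in_plane)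
  next
    case (Some u)
    have "Ps s \<in> oscPlane t \<longleftrightarrow> - (u^3) * 3 + 3 * u^2 + s = 0"
      using Some by (simp add: Ps_def oscPlane_def pt_in_plane)
    also have "\<dots> \<longleftrightarrow> cub u = s/3" using 3 by (auto simp: cub_def field_simps)
    finally show ?thesis using Some by auto
  qed
qed

lemma nOsc_Ps: "(3::'a::{finite,field}) \<noteq> 0 \<Longrightarrow> nOsc (Ps s) = K ((s::'a)/3)"
  by (simp add: nOsc_def Ps_osc card_image K_def)

lemma nOsc_Pinf: "nOsc (Pinf::('a::{finite,field}^4) set) \<noteq> 0"
proof -
  have "Pinf \<in> oscPlane (None::'a option)" by (simp add: Pinf_def oscPlane_def pt_in_plane)
  then have "{t. (Pinf::('a^4) set) \<in> oscPlane t} \<noteq> {}" by blast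
  then show ?thesis by (simp add: nOsc_def)
qed


lemma div_of_mul: "(c::'a::field) \<noteq> 0 \<Longrightarrow> c * X = Y \<Longrightarrow> X = Y / c"
  by (simp add: eq_divide_eq mult.commute)

lemma nine: "(3::'a::field) \<noteq> 0 \<Longrightarrow> (9::'a) \<noteq> 0" using nz by blast

lemma Ps_tan_Some: "Ps s \<in> tangentLine (Some u) \<longleftrightarrow> u * (2 - 3*u) = 0 \<and> s = 3*u^2 - 6*u^3"
proof -
  have i: "indep2 (v4 1 u (u^2) (u^3)) (v4 0 1 (2 * u) (3 * u^2))"
    using indep_CD[of "Some u"] by (simp add: Cvec_def Dv_def)
  have "Ps s \<in> tangentLine (Some u) \<longleftrightarrow>
     (\<exists>x y. v4 3 1 0 s = x *s v4 1 u (u^2) (u^3) + y *s v4 0 1 (2 * u) (3 * u^2))"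
    unfolding Ps_def tangentLine_def by (simp add: pt_in_line[OF i] del: v4_smult v4_add)
  also have "\<dots> \<longleftrightarrow> u * (2 - 3*u) = 0 \<and> s = 3*u^2 - 6*u^3"
  proof
    assume "\<exists>x y. v4 3 1 0 s = x *s v4 1 u (u^2) (u^3) + y *s v4 0 1 (2 * u) (3 * u^2)"
    then obtain x y where "v4 3 1 0 s = x *s v4 1 u (u^2) (u^3) + y *s v4 0 1 (2 * u) (3 * u^2)" by blast
    then have e: "3 = x" "1 = x*u + y" "0 = x*u^2 + y*(2*u)" "s = x*u^3 + y*(3*u^2)" by auto
    have "y = (x*u + y) - x*u" by simp
    then have y: "y = 1 - 3*u" using e(1,2) by simp
    show "u * (2 - 3*u) = 0 \<and> s = 3*u^2 - 6*u^3" using e unfolding y by (simp add: algebra_simps power2_eq_square power3_eq_cube)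
  next
    assume h: "u * (2 - 3*u) = 0 \<and> s = 3*u^2 - 6*u^3"
    show "\<exists>x y. v4 3 1 0 s = x *s v4 1 u (u^2) (u^3) + y *s v4 0 1 (2 * u) (3 * u^2)"
      by (rule exI[of _ 3], rule exI[of _ "1 - 3*u"]) (use h in \<open>simp add: algebra_simps power2_eq_square power3_eq_cube\<close>)
  qed
  finally show ?thesis .
qed

lemma Ps_tan_None: "(3::'a::field) \<noteq> 0 \<Longrightarrow> Ps (s::'a) \<notin> tangentLine None"
proof
  assume 3: "(3::'a) \<noteq> 0" and "Ps s \<in> tangentLine None"
  moreover have i: "indep2 (v4 0 0 0 1) (v4 0 0 1 (0::'a))" by (simp add: indep2_def)
  ultimately obtain x y where "v4 3 1 0 s = x *s v4 0 0 0 1 + y *s v4 0 0 1 (0::'a)"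
    unfolding Ps_def tangentLine_def using pt_in_line[OF i] by (simp del: v4_smult v4_add) blast
  then show False using 3 by simp
qed

lemma Ps_tan: "(3::'a::field) \<noteq> 0 \<Longrightarrow> (\<exists>t. Ps (s::'a) \<in> tangentLine t) \<longleftrightarrow> s = 0 \<or> s = -4/9"
proof
  assume 3: "(3::'a) \<noteq> 0" and "\<exists>t. Ps s \<in> tangentLine t"
  then obtain t where t: "Ps s \<in> tangentLine t" by blast
  then obtain u where "t = Some u" using Ps_tan_None[OF 3] by (cases t) auto
  then have h: "u * (2 - 3*u) = 0" "s = 3*u^2 - 6*u^3" using t Ps_tan_Some by auto
  then have "u = 0 \<or> 3*u = 2" by auto
  then show "s = 0 \<or> s = -4/9"
  proof
    assume "u = 0" then show ?thesis using h by simp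
  next
    assume u: "3*u = 2"
    have "9 * s = 9 * (3*u^2 - 6*u^3)" using h(2) by simp
    also have "\<dots> = 3*(3*u)^2 - 2*(3*u)^3" by algebra
    also have "\<dots> = -4" unfolding u by simp
    finally show ?thesis using nine[OF 3] by (simp add: field_simps)
  qed
next
  assume 3: "(3::'a) \<noteq> 0" and sd: "s = 0 \<or> s = -4/9"
  from sd show "\<exists>t. Ps s \<in> tangentLine t"
  proof
    assume "s = 0" then have "Ps s \<in> tangentLine (Some 0)" by (simp add: Ps_tan_Some)
    then show ?thesis by blast
  next
    assume s: "s = -4/9"
    define u :: 'a where "u = 2/3"
    have u: "3*u = 2" using 3 by (simp add: u_def)
    have "u * (2 - 3*u) = 0" using u by simp
    moreover have "9 * (3*u^2 - 6*u^3) = 3*(3*u)^2 - 2*(3*u)^3" by algebra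
    then have "9 * (3*u^2 - 6*u^3) = -4" unfolding u by simp
    then have "3*u^2 - 6*u^3 = (-4)/9" by (rule div_of_mul[OF nine[OF 3]])
    then have "s = 3*u^2 - 6*u^3" using s by simp
    ultimately have "Ps s \<in> tangentLine (Some u)" by (simp add: Ps_tan_Some)
    then show ?thesis by blast
  qed
qed


lemma card_scale: "(3::'a::{finite,field}) \<noteq> 0 \<Longrightarrow> card {s::'a. K (s/3) = k} = card {r::'a. K r = k}"
proof -
  assume 3: "(3::'a) \<noteq> 0"
  have "{s::'a. K (s/3) = k} = (\<lambda>r. 3*r) ` {r. K r = k}"
  proof (rule set_eqI, rule iffI)
    fix s :: 'a assume "s \<in> {s. K (s/3) = k}"
    then have "s/3 \<in> {r. K r = k}" "s = 3 * (s/3)" using 3 by auto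
    then show "s \<in> (\<lambda>r. 3*r) ` {r. K r = k}" by blast
  next
    fix s :: 'a assume "s \<in> (\<lambda>r. 3*r) ` {r. K r = k}"
    then obtain r where "K r = k" "s = 3 * r" by blast
    then show "s \<in> {s. K (s/3) = k}" using 3 by simp
  qed
  moreover have "inj_on (\<lambda>r::'a. 3*r) {r. K r = k}" using 3 by (simp add: inj_on_def)
  ultimately show ?thesis by (simp add: card_image)
qed

lemma four: "(2::'a::field) \<noteq> 0 \<Longrightarrow> (4::'a) \<noteq> 0"
proof -
  assume "(2::'a) \<noteq> 0"
  moreover have "(4::'a) = 2 * 2" by simp
  ultimately show ?thesis by (simp only: mult_eq_0_iff) simp
qed

lemma m0_inter: "m0 \<inter> X = (if Pinf \<in> X then {Pinf} else {}) \<union> Ps ` {s::'a::field. Ps s \<in> X}"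
proof -
  have r: "range Ps \<inter> X = Ps ` {s::'a. Ps s \<in> X}" by blast
  show ?thesis
  proof (cases "Pinf \<in> X")
    case True
    then have "m0 \<inter> X = insert Pinf (range (Ps::'a \<Rightarrow> _) \<inter> X)" unfolding m0_eq by (rule Int_insert_left_if1)
    then show ?thesis using True r by simp
  next
    case False
    then have "m0 \<inter> X = range (Ps::'a \<Rightarrow> _) \<inter> X" unfolding m0_eq by (rule Int_insert_left_if0)
    then show ?thesis using False r by simp
  qed
qed

lemma card_Ps_img: "card (Ps ` X) = card (X::'a::field set)"
  by (rule card_image[OF inj_on_subset[OF Ps_inj subset_UNIV]])

lemma card_m0_out: "Pinf \<notin> X \<Longrightarrow> card (m0 \<inter> X) = card {s::'a::field. Ps s \<in> X}"
  by (simp add: m0_inter card_Ps_img)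

lemma card_m0_in: "Pinf \<in> X \<Longrightarrow> finite {s::'a::field. Ps s \<in> X} \<Longrightarrow> card (m0 \<inter> X) = card {s::'a. Ps s \<in> X} + 1"
proof -
  assume a: "Pinf \<in> X" and f: "finite {s::'a::field. Ps s \<in> X}"
  have "m0 \<inter> X = insert Pinf (Ps ` {s::'a. Ps s \<in> X})" using a by (simp add: m0_inter)
  moreover have "Pinf \<notin> Ps ` {s::'a. Ps s \<in> X}" using Pinf_not_Ps by blast
  ultimately show ?thesis using f by (simp add: card_Ps_img)
qed

lemma Ps_P1: "(3::'a::{finite,field}) \<noteq> 0 \<Longrightarrow> Ps (s::'a) \<notin> P1"
  unfolding P1_def by (rule Ps_notC)

lemma Ps_P2: "(3::'a::{finite,field}) \<noteq> 0 \<Longrightarrow> Ps (s::'a) \<in> P2 \<longleftrightarrow> s = 0 \<or> s = -4/9"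
  unfolding P2_def using Ps_points[of s] Ps_notC[of s] Ps_tan[of s] by simp

lemma Ps_Pk: "(3::'a::{finite,field}) \<noteq> 0 \<Longrightarrow> Ps (s::'a) \<in> P3 \<longleftrightarrow> K (s/3) = 3"
  "(3::'a::{finite,field}) \<noteq> 0 \<Longrightarrow> Ps (s::'a) \<in> P4 \<longleftrightarrow> K (s/3) = 1"
  "(3::'a::{finite,field}) \<noteq> 0 \<Longrightarrow> Ps (s::'a) \<in> P5 \<longleftrightarrow> K (s/3) = 0"
  unfolding P3_def P4_def P5_def using Ps_points[of s] Ps_notC[of s] nOsc_Ps[of s] by simp_all

lemma Pinf_P: "Pinf \<in> (P1::('a::{finite,field}^4) set set)" "Pinf \<notin> (P2::('a::{finite,field}^4) set set)"
   "Pinf \<notin> (P3::('a::{finite,field}^4) set set)" "Pinf \<notin> (P4::('a::{finite,field}^4) set set)"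
   "Pinf \<notin> (P5::('a::{finite,field}^4) set set)"
  using Pinf_C nOsc_Pinf unfolding P1_def P2_def P3_def P4_def P5_def by auto

lemma OD0_m0:
  assumes h2: "(2::'a::{finite,field}) \<noteq> 0" and h3: "(3::'a) \<noteq> 0"
  shows "OD0 (m0::('a^4) set set) = [1, 2, card {r::'a. K r = 3}, card {r::'a. K r = 1}, card {r::'a. K r = 0}]"
proof -
  have e1: "{s::'a. Ps s \<in> P1} = {}" using Ps_P1[OF h3] by blast
  have "card ((m0::('a^4) set set) \<inter> P1) = card {s::'a. Ps s \<in> P1} + 1" by (rule card_m0_in[OF Pinf_P(1)]) simp
  then have c1: "card ((m0::('a^4) set set) \<inter> P1) = 1" unfolding e1 by simp
  have e2: "{s::'a. Ps s \<in> P2} = {0, -4/9}" using Ps_P2[OF h3] by blast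
  have ne: "(0::'a) \<noteq> -4/9" using four[OF h2] nine[OF h3] by simp
  have "card ((m0::('a^4) set set) \<inter> P2) = card {s::'a. Ps s \<in> P2}" by (rule card_m0_out[OF Pinf_P(2)])
  then have c2: "card ((m0::('a^4) set set) \<inter> P2) = 2" unfolding e2 using ne by simp
  have "card ((m0::('a^4) set set) \<inter> P3) = card {s::'a. Ps s \<in> P3}" by (rule card_m0_out[OF Pinf_P(3)])
  also have "{s::'a. Ps s \<in> P3} = {s. K (s/3) = 3}" using Ps_Pk(1)[OF h3] by blast
  finally have c3: "card ((m0::('a^4) set set) \<inter> P3) = card {r::'a. K r = 3}" using card_scale[OF h3] by simp
  have "card ((m0::('a^4) set set) \<inter> P4) = card {s::'a. Ps s \<in> P4}" by (rule card_m0_out[OF Pinf_P(4)])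
  also have "{s::'a. Ps s \<in> P4} = {s. K (s/3) = 1}" using Ps_Pk(2)[OF h3] by blast
  finally have c4: "card ((m0::('a^4) set set) \<inter> P4) = card {r::'a. K r = 1}" using card_scale[OF h3] by simp
  have "card ((m0::('a^4) set set) \<inter> P5) = card {s::'a. Ps s \<in> P5}" by (rule card_m0_out[OF Pinf_P(5)])
  also have "{s::'a. Ps s \<in> P5} = {s. K (s/3) = 0}" using Ps_Pk(3)[OF h3] by blast
  finally have c5: "card ((m0::('a^4) set set) \<inter> P5) = card {r::'a. K r = 0}" using card_scale[OF h3] by simp
  show ?thesis unfolding OD0_def using c1 c2 c3 c4 c5 by simp
qed



definition Pl :: "'a::field \<Rightarrow> ('a^4) set set" where "Pl z = plane (v4 1 (-3) z 0)"
definition PlI :: "('a::field^4) set set" where "PlI = plane (v4 0 0 1 0)"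

lemma dot4_expl: "dot4 w v = w$0 * v$0 + w$1 * v$1 + w$2 * v$2 + w$3 * v$3"
  by (simp add: dot4_def sum4)

lemma Ps_m0: "Ps s \<in> (m0::('a::field^4) set set)" and Pinf_m0: "Pinf \<in> (m0::('a::field^4) set set)"
  by (auto simp: m0_eq)

lemma m0_sub_plane: "(m0::('a::field^4) set set) \<subseteq> plane w \<longleftrightarrow> 3 * w$0 + w$1 = 0 \<and> w$3 = 0"
proof
  assume h: "(m0::('a^4) set set) \<subseteq> plane w"
  have "Ps 0 \<in> plane w" "Pinf \<in> plane w" using h Ps_m0 Pinf_m0 by blast+
  then show "3 * w$0 + w$1 = 0 \<and> w$3 = 0"
    by (simp_all add: Ps_def Pinf_def pt_in_plane dot4_expl algebra_simps)
next
  assume h: "3 * w$0 + w$1 = 0 \<and> w$3 = 0"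
  show "(m0::('a^4) set set) \<subseteq> plane w"
  proof
    fix P :: "('a^4) set" assume "P \<in> m0"
    then have "P = Pinf \<or> (\<exists>s. P = Ps s)" by (auto simp: m0_eq)
    then show "P \<in> plane w"
    proof
      assume "P = Pinf" then show ?thesis using h by (simp add: Pinf_def pt_in_plane dot4_expl)
    next
      assume "\<exists>s. P = Ps s"
      then obtain s where "P = Ps s" by blast
      then show ?thesis using h by (simp add: Ps_def pt_in_plane dot4_expl algebra_simps)
    qed
  qed
qed

lemma thru: "{H \<in> planes. (m0::('a::field^4) set set) \<subseteq> H} = insert PlI (range Pl)"
proof (rule set_eqI, rule iffI)
  fix H :: "('a^4) set set" assume "H \<in> {H \<in> planes. m0 \<subseteq> H}"
  then obtain w where w: "w \<noteq> 0" "H = plane w" "m0 \<subseteq> plane w" by (auto simp: planes_def)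
  then have e: "3 * w$0 + w$1 = 0" "w$3 = 0" using m0_sub_plane by blast+
  show "H \<in> insert PlI (range Pl)"
  proof (cases "w$0 = 0")
    case True
    then have w1: "w$1 = 0" using e by simp
    then have w2: "w$2 \<noteq> 0" using w(1) e True by (subst (asm) v4_expand[of w]) auto
    have "w = w$2 *s v4 0 0 1 0" using True w1 e by (subst v4_expand[of w]) simp
    then have "H = PlI" using w(2) plane_smult[OF w2] by (metis PlI_def)
    then show ?thesis by simp
  next
    case False
    have "w = w$0 *s v4 1 (-3) (w$2 / w$0) 0" using False e
      by (subst v4_expand[of w]) (simp add: algebra_simps eq_neg_iff_add_eq_0)
    then have "H = Pl (w$2 / w$0)" using w(2) plane_smult[OF False] by (metis Pl_def)
    then show ?thesis by simp
  qed
next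
  fix H :: "('a^4) set set" assume "H \<in> insert PlI (range Pl)"
  then show "H \<in> {H \<in> planes. m0 \<subseteq> H}"
  proof
    assume "H = PlI" then show ?thesis using m0_sub_plane[of "v4 0 0 1 0"] by (auto simp: PlI_def planes_def)
  next
    assume "H \<in> range Pl"
    then obtain z where "H = Pl z" by blast
    then show ?thesis using m0_sub_plane[of "v4 1 (-3) z 0"] by (auto simp: Pl_def planes_def)
  qed
qed

lemma Pl_inj: "inj (Pl::'a::field \<Rightarrow> _)"
proof (rule injI)
  fix z z' :: 'a assume e: "Pl z = Pl z'"
  have "pt (v4 (-z') 0 1 0) \<in> Pl z'" by (simp add: Pl_def pt_in_plane)
  then have "pt (v4 (-z') 0 1 0) \<in> Pl z" using e by simp
  then show "z = z'" by (simp add: Pl_def pt_in_plane)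
qed

lemma PlI_not_Pl: "PlI \<noteq> Pl (z::'a::field)"
proof
  assume "PlI = Pl z"
  moreover have "pt (v4 1 0 0 (0::'a)) \<in> PlI" by (simp add: PlI_def pt_in_plane)
  ultimately have "pt (v4 1 0 0 (0::'a)) \<in> Pl z" by simp
  then show False by (simp add: Pl_def pt_in_plane)
qed

lemma card_planeC: "card (H \<inter> Ccurve) = card {t. pt (Cvec t) \<in> H}"
proof -
  have "H \<inter> Ccurve = (\<lambda>t. pt (Cvec t)) ` {t. pt (Cvec t) \<in> H}" by (auto simp: Ccurve_def)
  moreover have "inj_on (\<lambda>t. pt (Cvec t)) {t. pt (Cvec t) \<in> H}"
    by (rule inj_onI) (rule Cpt_inj)
  ultimately show ?thesis by (simp add: card_image)
qed

definition R :: "'a::field \<Rightarrow> nat" where "R z = card {u. z*u^2 - 3*u + 1 = 0}"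

lemma Pl_C: "card (Pl z \<inter> Ccurve) = R (z::'a::{finite,field}) + 1"
proof -
  have "{t. pt (Cvec t) \<in> Pl z} = insert None (Some ` {u. z*u^2 - 3*u + 1 = 0})"
  proof (rule set_eqI)
    fix t :: "'a option"
    show "t \<in> {t. pt (Cvec t) \<in> Pl z} \<longleftrightarrow> t \<in> insert None (Some ` {u. z*u^2 - 3*u + 1 = 0})"
      by (cases t) (auto simp: Pl_def pt_in_plane Cvec_nonzero Cvec_def algebra_simps)
  qed
  then show ?thesis by (simp add: card_planeC card_image R_def)
qed

lemma PlI_C: "card ((PlI::('a::{finite,field}^4) set set) \<inter> Ccurve) = (2::nat)"
proof -
  have "{t. pt (Cvec t) \<in> (PlI::('a::{finite,field}^4) set set)} = {None, Some 0}"
  proof (rule set_eqI)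
    fix t :: "'a option"
    show "t \<in> {t. pt (Cvec t) \<in> PlI} \<longleftrightarrow> t \<in> {None, Some 0}"
      by (cases t) (auto simp: PlI_def pt_in_plane Cvec_nonzero Cvec_def)
  qed
  then show ?thesis by (simp add: card_planeC)
qed


lemma R0: "(3::'a::{finite,field}) \<noteq> 0 \<Longrightarrow> R (0::'a) = 1"
proof -
  assume 3: "(3::'a) \<noteq> 0"
  have "{u::'a. 0*u^2 - 3*u + 1 = 0} = {1/3}" using 3 by (auto simp: field_simps)
  then show ?thesis by (simp add: R_def)
qed

lemma Rz: "(2::'a::{finite,field}) \<noteq> 0 \<Longrightarrow> z \<noteq> 0 \<Longrightarrow> R (z::'a) = card {w. w^2 = 9 - 4*z}"
proof -
  assume h2: "(2::'a) \<noteq> 0" and z: "z \<noteq> 0"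
  have id: "(2*z*u - 3)^2 = 4*z*(z*u^2 - 3*u + 1) + (9 - 4*z)" for u by algebra
  have "bij_betw (\<lambda>u. 2*z*u - 3) {u. z*u^2 - 3*u + 1 = 0} {w. w^2 = 9 - 4*z}"
  proof (rule bij_betw_byWitness[where f'="\<lambda>w. (w + 3)/(2*z)"])
    show "\<forall>a\<in>{u. z*u^2 - 3*u + 1 = 0}. (2*z*a - 3 + 3)/(2*z) = a" using h2 z by simp
    show "\<forall>a'\<in>{w. w^2 = 9 - 4*z}. 2*z*((a' + 3)/(2*z)) - 3 = a'" using h2 z by simp
    show "(\<lambda>u. 2*z*u - 3) ` {u. z*u^2 - 3*u + 1 = 0} \<subseteq> {w. w^2 = 9 - 4*z}" using id by auto
    show "(\<lambda>w. (w + 3)/(2*z)) ` {w. w^2 = 9 - 4*z} \<subseteq> {u. z*u^2 - 3*u + 1 = 0}"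
    proof
      fix u assume "u \<in> (\<lambda>w. (w + 3)/(2*z)) ` {w. w^2 = 9 - 4*z}"
      then obtain w where w: "w^2 = 9 - 4*z" "u = (w+3)/(2*z)" by blast
      have "2*z*u - 3 = w" unfolding w(2) using h2 z by simp
      then have "4*z*(z*u^2 - 3*u + 1) = 0" using id[of u] w(1) by simp
      then show "u \<in> {u. z*u^2 - 3*u + 1 = 0}" using z four[OF h2] by simp
    qed
  qed
  then show ?thesis unfolding R_def by (rule bij_betw_same_card)
qed

lemma card_sq0: "card {w::'a::{finite,field}. w^2 = 0} = 1"
proof -
  have "{w::'a. w^2 = 0} = {0}" by auto
  then show ?thesis by simp
qed

definition issq :: "'a::field \<Rightarrow> bool" where "issq c \<longleftrightarrow> (\<exists>x. x^2 = c)"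

lemma R_vals:
  assumes h2: "(2::'a::{finite,field}) \<noteq> 0" and h3: "(3::'a) \<noteq> 0"
  shows "R z = 1 \<longleftrightarrow> z = 0 \<or> z = 9/(4::'a)"
    "R z = 2 \<longleftrightarrow> z \<noteq> 0 \<and> 9 - 4*z \<noteq> 0 \<and> issq (9 - 4*z)"
    "R z = 0 \<longleftrightarrow> \<not> issq (9 - 4*z)"
proof -
  have sq9: "issq (9::'a)" unfolding issq_def by (rule exI[of _ 3]) simp
  have sq0: "issq (0::'a)" unfolding issq_def by (rule exI[of _ 0]) simp
  have 4: "(4::'a) \<noteq> 0" using four[OF h2] .
  have c0: "9 - 4*z = 0 \<longleftrightarrow> z = 9/4" using 4 by (auto simp: field_simps)
  have "R z = 1 \<longleftrightarrow> z = 0 \<or> z = 9/(4::'a)" 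
   and "R z = 2 \<longleftrightarrow> z \<noteq> 0 \<and> 9 - 4*z \<noteq> 0 \<and> issq (9 - 4*z)"
   and "R z = 0 \<longleftrightarrow> \<not> issq (9 - 4*z)"
  proof -
    consider "z = 0" | "z \<noteq> 0" "9 - 4*z = 0" | "z \<noteq> 0" "9 - 4*z \<noteq> 0" by blast
    then have "(R z = 1 \<longleftrightarrow> z = 0 \<or> z = 9/(4::'a)) \<and>
      (R z = 2 \<longleftrightarrow> z \<noteq> 0 \<and> 9 - 4*z \<noteq> 0 \<and> issq (9 - 4*z)) \<and> (R z = 0 \<longleftrightarrow> \<not> issq (9 - 4*z))"
    proof cases
      case 1 then show ?thesis using R0[OF h3] sq9 by simp
    next
      case 2
      then have "R z = 1" using Rz[OF h2 2(1)] card_sq0 by simp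
      then show ?thesis using 2 c0 sq0 by simp
    next
      case 3
      then have r: "R z = (if issq (9 - 4*z) then 2 else 0)" using Rz[OF h2 3(1)] card_sqrt[OF h2 3(2)]
        by (simp add: issq_def)
      have "z \<noteq> 9/4" using 3 c0 by simp
      then show ?thesis using 3 r by auto
    qed
    then show "R z = 1 \<longleftrightarrow> z = 0 \<or> z = 9/(4::'a)" 
     and "R z = 2 \<longleftrightarrow> z \<noteq> 0 \<and> 9 - 4*z \<noteq> 0 \<and> issq (9 - 4*z)"
     and "R z = 0 \<longleftrightarrow> \<not> issq (9 - 4*z)" by blast+
  qed
  then show "R z = 1 \<longleftrightarrow> z = 0 \<or> z = 9/(4::'a)" 
     and "R z = 2 \<longleftrightarrow> z \<noteq> 0 \<and> 9 - 4*z \<noteq> 0 \<and> issq (9 - 4*z)"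
     and "R z = 0 \<longleftrightarrow> \<not> issq (9 - 4*z)" by blast+
qed

lemma card_affine: "(4::'a::{finite,field}) \<noteq> 0 \<Longrightarrow> card {z::'a. P (9 - 4*z)} = card {c. P c}"
proof -
  assume 4: "(4::'a) \<noteq> 0"
  have "{c. P c} = (\<lambda>z. 9 - 4*z) ` {z::'a. P (9 - 4*z)}"
  proof (rule set_eqI, rule iffI)
    fix c :: 'a assume "c \<in> {c. P c}"
    moreover have "c = 9 - 4 * ((9 - c)/4)"
    proof -
      have e: "4 * ((9 - c)/4) = 9 - c" by (simp only: times_divide_eq_right nonzero_mult_div_cancel_left[OF 4])
      show ?thesis by (simp only: e) simp
    qed
    ultimately show "c \<in> (\<lambda>z. 9 - 4*z) ` {z::'a. P (9 - 4*z)}" by (metis (mono_tags) image_eqI mem_Collect_eq)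
  qed auto
  moreover have "inj (\<lambda>z::'a. 9 - 4*z)" using 4 by (auto intro: injI)
  ultimately show ?thesis by (simp add: card_image inj_on_subset)
qed

lemma R_counts:
  assumes h2: "(2::'a::{finite,field}) \<noteq> 0" and h3: "(3::'a) \<noteq> 0"
  shows "card {z::'a. R z = 1} = 2"
    "card {z::'a. R z = 2} + 1 = card {c::'a. c \<noteq> 0 \<and> (\<exists>x. x^2 = c)}"
    "card {z::'a. R z = 0} + card {c::'a. c \<noteq> 0 \<and> (\<exists>x. x^2 = c)} + 1 = CARD('a)"
proof -
  have 4: "(4::'a) \<noteq> 0" using four[OF h2] .
  have "{z::'a. R z = 1} = {0, 9/4}" using R_vals(1)[OF h2 h3] by blast
  moreover have "(0::'a) \<noteq> 9/4" using 4 nine[OF h3] by simp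
  ultimately show "card {z::'a. R z = 1} = 2" by simp
  let ?Q = "{c::'a. c \<noteq> 0 \<and> (\<exists>x. x^2 = c)}"
  have "card {z::'a. R z = 2} = card {z::'a. (9 - 4*z) \<noteq> 9 \<and> 9 - 4*z \<noteq> 0 \<and> issq (9 - 4*z)}"
  proof -
    have "{z::'a. R z = 2} = {z::'a. (9 - 4*z) \<noteq> 9 \<and> 9 - 4*z \<noteq> 0 \<and> issq (9 - 4*z)}"
      using R_vals(2)[OF h2 h3] 4 by auto
    then show ?thesis by simp
  qed
  also have "\<dots> = card {c::'a. c \<noteq> 9 \<and> c \<noteq> 0 \<and> issq c}" by (rule card_affine[OF 4])
  finally have a: "card {z::'a. R z = 2} = card {c::'a. c \<noteq> 9 \<and> c \<noteq> 0 \<and> issq c}" .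
  have "?Q = insert 9 {c::'a. c \<noteq> 9 \<and> c \<noteq> 0 \<and> issq c}"
    using nine[OF h3] by (auto simp: issq_def intro: exI[of _ 3])
  then have "card ?Q = card {c::'a. c \<noteq> 9 \<and> c \<noteq> 0 \<and> issq c} + 1" by simp
  then show "card {z::'a. R z = 2} + 1 = card ?Q" using a by simp
  have "card {z::'a. R z = 0} = card {z::'a. \<not> issq (9 - 4*z)}"
    using R_vals(3)[OF h2 h3] by simp
  also have "\<dots> = card {c::'a. \<not> issq c}" by (rule card_affine[OF 4])
  finally have b: "card {z::'a. R z = 0} = card {c::'a. \<not> issq c}" .
  have U: "(UNIV::'a set) = {c. \<not> issq c} \<union> insert 0 ?Q" by (auto simp: issq_def)
  have "CARD('a) = card {c::'a. \<not> issq c} + card (insert 0 ?Q)"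
    unfolding U by (rule card_Un_disjoint) (auto simp: issq_def)
  then show "card {z::'a. R z = 0} + card ?Q + 1 = CARD('a)" using b by simp
qed


lemma osc_not: "(3::'a::field) \<noteq> 0 \<Longrightarrow> \<not> (m0::('a^4) set set) \<subseteq> oscPlane t"
proof (cases t)
  case None
  assume 3: "(3::'a) \<noteq> 0"
  have "Ps 0 \<notin> (oscPlane t::('a^4) set set)" using None 3 by (simp add: Ps_def oscPlane_def pt_in_plane)
  then show ?thesis using Ps_m0 by blast
next
  case (Some u)
  have "Pinf \<notin> (oscPlane t::('a^4) set set)" using Some by (simp add: Pinf_def oscPlane_def pt_in_plane)
  then show ?thesis using Pinf_m0 by blast
qed

lemma m0_lines: "(m0::('a::field^4) set set) \<in> lines"
  unfolding m0_def lines_def using indep_m0 by blast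

lemma m0_C: "(3::'a::{finite,field}) \<noteq> 0 \<Longrightarrow> card ((m0::('a^4) set set) \<inter> Ccurve) = 1"
proof -
  assume 3: "(3::'a) \<noteq> 0"
  have e: "{s::'a. Ps s \<in> Ccurve} = {}" using Ps_notC[OF 3] by blast
  have "card ((m0::('a^4) set set) \<inter> Ccurve) = card {s::'a. Ps s \<in> Ccurve} + 1"
    by (rule card_m0_in[OF Pinf_C]) simp
  then show ?thesis unfolding e by simp
qed

lemma thru_X: "X \<subseteq> planes \<Longrightarrow> {H \<in> X. (m0::('a::field^4) set set) \<subseteq> H} = insert PlI (range Pl) \<inter> X"
  using thru by blast

lemma card_Pl_img: "card (Pl ` X) = card (X::'a::field set)"
  by (rule card_image[OF inj_on_subset[OF Pl_inj subset_UNIV]])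

lemma thru_inter: "insert PlI (range Pl) \<inter> X = (if PlI \<in> X then {PlI} else {}) \<union> Pl ` {z::'a::field. Pl z \<in> X}"
proof -
  have r: "range Pl \<inter> X = Pl ` {z::'a. Pl z \<in> X}" by blast
  show ?thesis
  proof (cases "PlI \<in> X")
    case True
    then have "insert PlI (range Pl) \<inter> X = insert PlI (range (Pl::'a \<Rightarrow> _) \<inter> X)" by (rule Int_insert_left_if1)
    then show ?thesis using True r by simp
  next
    case False
    then have "insert PlI (range Pl) \<inter> X = range (Pl::'a \<Rightarrow> _) \<inter> X" by (rule Int_insert_left_if0)
    then show ?thesis using False r by simp
  qed
qed

lemma card_thru_out: "PlI \<notin> X \<Longrightarrow> card (insert PlI (range Pl) \<inter> X) = card {z::'a::field. Pl z \<in> X}"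
  by (simp add: thru_inter card_Pl_img)

lemma card_thru_in: "PlI \<in> X \<Longrightarrow> finite {z::'a::field. Pl z \<in> X} \<Longrightarrow>
  card (insert PlI (range Pl) \<inter> X) = card {z::'a. Pl z \<in> X} + 1"
proof -
  assume a: "PlI \<in> X" and f: "finite {z::'a::field. Pl z \<in> X}"
  have "insert PlI (range Pl) \<inter> X = insert PlI (Pl ` {z::'a. Pl z \<in> X})" using a by (simp add: thru_inter)
  moreover have "PlI \<notin> Pl ` {z::'a. Pl z \<in> X}" using PlI_not_Pl by blast
  ultimately show ?thesis using f by (simp add: card_Pl_img)
qed

lemma Pl_planes: "Pl z \<in> (planes::('a::field^4) set set set)"
  by (auto simp: Pl_def planes_def)
lemma PlI_planes: "PlI \<in> (planes::('a::field^4) set set set)"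
  by (auto simp: PlI_def planes_def)

lemma Pl_notH1: "(3::'a::{finite,field}) \<noteq> 0 \<Longrightarrow> Pl (z::'a) \<notin> H1" and PlI_notH1: "(3::'a::{finite,field}) \<noteq> 0 \<Longrightarrow> (PlI::('a^4) set set) \<notin> H1"
  using thru osc_not by (fastforce simp: H1_def)+

lemma OD2_m0:
  assumes h2: "(2::'a::{finite,field}) \<noteq> 0" and h3: "(3::'a) \<noteq> 0"
  shows "OD2 (m0::('a^4) set set) = [0, 3, card {z::'a. R z = 2}, card {z::'a. R z = 0}, 0]"
proof -
  have c1: "card {H \<in> H1. (m0::('a^4) set set) \<subseteq> H} = 0"
  proof -
    have "{H \<in> H1. (m0::('a^4) set set) \<subseteq> H} = {}" using osc_not[OF h3] by (auto simp: H1_def)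
    then show ?thesis by simp
  qed
  have "card {H \<in> H2. (m0::('a^4) set set) \<subseteq> H} = card (insert PlI (range Pl) \<inter> (H2::('a^4) set set set))"
    by (subst thru_X) (auto simp: H2_def)
  also have "\<dots> = card {z::'a. Pl z \<in> H2} + 1"
    by (rule card_thru_in) (simp_all add: H2_def PlI_planes PlI_C)
  also have "{z::'a. Pl z \<in> H2} = {z. R z = 1}" by (auto simp: H2_def Pl_planes Pl_C)
  finally have c2: "card {H \<in> H2. (m0::('a^4) set set) \<subseteq> H} = 3" using R_counts(1)[OF h2 h3] by simp
  have "card {H \<in> H3. (m0::('a^4) set set) \<subseteq> H} = card (insert PlI (range Pl) \<inter> (H3::('a^4) set set set))"
    by (subst thru_X) (auto simp: H3_def)
  also have "\<dots> = card {z::'a. Pl z \<in> H3}"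
    by (rule card_thru_out) (simp add: H3_def PlI_C)
  also have "{z::'a. Pl z \<in> H3} = {z. R z = 2}" by (auto simp: H3_def Pl_planes Pl_C)
  finally have c3: "card {H \<in> H3. (m0::('a^4) set set) \<subseteq> H} = card {z::'a. R z = 2}" .
  have "card {H \<in> H4. (m0::('a^4) set set) \<subseteq> H} = card (insert PlI (range Pl) \<inter> (H4::('a^4) set set set))"
    by (subst thru_X) (auto simp: H4_def)
  also have "\<dots> = card {z::'a. Pl z \<in> H4}"
    by (rule card_thru_out) (simp add: H4_def PlI_C)
  also have "{z::'a. Pl z \<in> H4} = {z. R z = 0}" using Pl_notH1[OF h3] by (auto simp: H4_def Pl_planes Pl_C)
  finally have c4: "card {H \<in> H4. (m0::('a^4) set set) \<subseteq> H} = card {z::'a. R z = 0}" .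
  have "card {H \<in> H5. (m0::('a^4) set set) \<subseteq> H} = card (insert PlI (range Pl) \<inter> (H5::('a^4) set set set))"
    by (subst thru_X) (auto simp: H5_def)
  also have "\<dots> = card {z::'a. Pl z \<in> H5}"
  proof (rule card_thru_out)
    have "card ((PlI::('a^4) set set) \<inter> Ccurve) \<noteq> 0" by (simp add: PlI_C)
    then show "(PlI::('a^4) set set) \<notin> H5" by (auto simp: H5_def)
  qed
  also have "{z::'a. Pl z \<in> H5} = {}"
  proof -
    have "card (Pl z \<inter> Ccurve) \<noteq> 0" for z :: 'a by (simp add: Pl_C)
    then show ?thesis by (auto simp: H5_def)
  qed
  finally have c5: "card {H \<in> H5. (m0::('a^4) set set) \<subseteq> H} = 0" by simp
  show ?thesis unfolding OD2_def using c1 c2 c3 c4 c5 by simp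
qed



lemma char_facts:
  assumes "CHAR('a::{finite,field}) \<noteq> 2" and "CHAR('a) \<noteq> 3"
  shows "(2::'a) \<noteq> 0" "(3::'a) \<noteq> 0"
proof -
  have c1: "CHAR('a) \<noteq> 1"
  proof
    assume "CHAR('a) = 1"
    then have "of_nat 1 = (0::'a)" by (simp add: of_nat_eq_0_iff_char_dvd)
    then show False by simp
  qed
  show "(2::'a) \<noteq> 0"
  proof
    assume "(2::'a) = 0"
    then have "of_nat 2 = (0::'a)" by simp
    then have "CHAR('a) dvd 2" by (simp only: of_nat_eq_0_iff_char_dvd)
    moreover have "CHAR('a) \<le> 2" using calculation by (rule dvd_imp_le) simp
    ultimately show False using assms c1 by (cases "CHAR('a)") (auto simp: le_Suc_eq)
  qed
  show "(3::'a) \<noteq> 0"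
  proof
    assume "(3::'a) = 0"
    then have "of_nat 3 = (0::'a)" by simp
    then have "CHAR('a) dvd 3" by (simp only: of_nat_eq_0_iff_char_dvd)
    moreover have "CHAR('a) \<le> 3" using calculation by (rule dvd_imp_le) simp
    moreover have "\<not> (2::nat) dvd 3" by simp
    ultimately show False using assms c1 by (cases "CHAR('a)") (auto simp: le_Suc_eq)
  qed
qed


lemma sq_card3: "(3::'a::{finite,field}) \<noteq> 0 \<Longrightarrow> (2::'a) \<noteq> 0 \<Longrightarrow>
   card {w. w^2 = (-3::'a)} = (if \<exists>x::'a. x^2 = -3 then 2 else 0)"
  by (rule card_sqrt) simp_all

theorem mainTheorem11:
  fixes q :: nat
  assumes "CARD('a::{finite,field}) = q"
    and "CHAR('a) \<noteq> 2" and "CHAR('a) \<noteq> 3"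
  shows "let L4 = Gorbit (line0 :: ('a ^ 4) set set); L7 = polarLine ` L4 in
     (\<exists>m\<in>L7. L7 = Gorbit m) \<and>
     (\<forall>l\<in>L7. l \<in> lines \<and> card (l \<inter> Ccurve) = 1 \<and> (\<forall>t. \<not> l \<subseteq> oscPlane t) \<and>
        map real (OD2 l) = [0, 3, (real q - 3) / 2, (real q - 1) / 2, 0] \<and>
        ((\<not> (\<exists>x::'a. x^2 = -3)) \<longrightarrow>
           map real (OD0 l) = [1, 2, (real q - 5) / 6, (real q - 3) / 2, (real q + 1) / 3]) \<and>
        ((\<exists>x::'a. x^2 = -3) \<longrightarrow>
           map real (OD0 l) = [1, 2, (real q - 7) / 6, (real q - 1) / 2, (real q - 1) / 3]))"
proof -
  have h2: "(2::'a) \<noteq> 0" and h3: "(3::'a) \<noteq> 0" using char_facts assms(2,3) by blast+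
  have L7: "polarLine ` Gorbit (line0 :: ('a ^ 4) set set) = Gorbit m0" by (rule L7_eq[OF h3])
  let ?Q = "{c::'a. c \<noteq> 0 \<and> (\<exists>x. x^2 = c)}"
  have sq: "2 * card ?Q + 1 = q" using card_squares[OF h2] assms(1) by simp
  have r2: "card {z::'a. R z = 2} + 1 = card ?Q" and r0: "card {z::'a. R z = 0} + card ?Q + 1 = q"
    using R_counts[OF h2 h3] assms(1) by simp_all
  have k1: "card {r::'a. K r = 1} + 3 * card {r::'a. K r = 3} + 4 = q"
    and k2: "6 * card {r::'a. K r = 3} + 5 + card {w. w^2 = (-3::'a)} = q"
    and k3: "card {r::'a. K r = 0} + card {r::'a. K r = 1} + card {r::'a. K r = 3} + 2 = q"
    using K_rel[OF h2 h3] assms(1) by simp_all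
  have sqR: "2 * real (card ?Q) + 1 = real q" using arg_cong[OF sq, of real] by simp
  have r2R: "real (card {z::'a. R z = 2}) + 1 = real (card ?Q)" using arg_cong[OF r2, of real] by simp
  have r0R: "real (card {z::'a. R z = 0}) + real (card ?Q) + 1 = real q" using arg_cong[OF r0, of real] by simp
  have k1R: "real (card {r::'a. K r = 1}) + 3 * real (card {r::'a. K r = 3}) + 4 = real q"
    using arg_cong[OF k1, of real] by simp
  have k2R: "6 * real (card {r::'a. K r = 3}) + 5 + real (card {w. w^2 = (-3::'a)}) = real q"
    using arg_cong[OF k2, of real] by simp
  have k3R: "real (card {r::'a. K r = 0}) + real (card {r::'a. K r = 1}) + real (card {r::'a. K r = 3}) + 2 = real q"
    using arg_cong[OF k3, of real] by simp
  have OD2v: "map real (OD2 (m0::('a^4) set set)) = [0, 3, (real q - 3) / 2, (real q - 1) / 2, 0]"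
  proof -
    have "real (card {z::'a. R z = 2}) = (real q - 3) / 2" using sqR r2R by (simp add: field_simps)
    moreover have "real (card {z::'a. R z = 0}) = (real q - 1) / 2" using sqR r0R by (simp add: field_simps)
    ultimately show ?thesis by (simp add: OD2_m0[OF h2 h3])
  qed
  have OD0n: "\<not> (\<exists>x::'a. x^2 = -3) \<Longrightarrow>
     map real (OD0 (m0::('a^4) set set)) = [1, 2, (real q - 5) / 6, (real q - 3) / 2, (real q + 1) / 3]"
  proof -
    assume ns: "\<not> (\<exists>x::'a. x^2 = -3)"
    then have z: "card {w. w^2 = (-3::'a)} = 0" using sq_card3[OF h3 h2] by simp
    have "real (card {r::'a. K r = 3}) = (real q - 5) / 6" using k2R z by (simp add: field_simps)
    moreover have "real (card {r::'a. K r = 1}) = (real q - 3) / 2" using k1R k2R z by (simp add: field_simps)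
    moreover have "real (card {r::'a. K r = 0}) = (real q + 1) / 3" using k1R k2R k3R z by (simp add: field_simps)
    ultimately show ?thesis by (simp add: OD0_m0[OF h2 h3])
  qed
  have OD0s: "(\<exists>x::'a. x^2 = -3) \<Longrightarrow>
     map real (OD0 (m0::('a^4) set set)) = [1, 2, (real q - 7) / 6, (real q - 1) / 2, (real q - 1) / 3]"
  proof -
    assume ns: "(\<exists>x::'a. x^2 = -3)"
    then have z: "card {w. w^2 = (-3::'a)} = 2" using sq_card3[OF h3 h2] by simp
    have "real (card {r::'a. K r = 3}) = (real q - 7) / 6" using k2R z by (simp add: field_simps)
    moreover have "real (card {r::'a. K r = 1}) = (real q - 1) / 2" using k1R k2R z by (simp add: field_simps)
    moreover have "real (card {r::'a. K r = 0}) = (real q - 1) / 3" using k1R k2R k3R z by (simp add: field_simps)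
    ultimately show ?thesis by (simp add: OD0_m0[OF h2 h3])
  qed
  have all: "l \<in> lines \<and> card (l \<inter> Ccurve) = 1 \<and> (\<forall>t. \<not> l \<subseteq> oscPlane t) \<and>
        map real (OD2 l) = [0, 3, (real q - 3) / 2, (real q - 1) / 2, 0] \<and>
        ((\<not> (\<exists>x::'a. x^2 = -3)) \<longrightarrow>
           map real (OD0 l) = [1, 2, (real q - 5) / 6, (real q - 3) / 2, (real q + 1) / 3]) \<and>
        ((\<exists>x::'a. x^2 = -3) \<longrightarrow>
           map real (OD0 l) = [1, 2, (real q - 7) / 6, (real q - 1) / 2, (real q - 1) / 3])"
    if l: "l \<in> Gorbit (m0::('a^4) set set)" for l
  proof -
    from l obtain a b c d where M: "a*d - b*c \<noteq> (0::'a)" "l = actPoint (gmat a b c d) ` m0"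
      by (auto simp: Gorbit_def Gmats_def actLine_def)
    interpret ps: psym "actPoint (gmat a b c d)" "actPoint (gmat d (-b) (-c) a)"
      by (rule psym_act[OF h3 M(1)])
    have "l \<in> lines" unfolding M(2) by (rule act_lines[OF M(1) m0_lines])
    moreover have "card (l \<inter> Ccurve) = 1" unfolding M(2) using ps.card_C_f[OF m0_points] m0_C[OF h3] by simp
    moreover have "\<forall>t. \<not> l \<subseteq> oscPlane t"
      using ps.osc_f[OF m0_points] osc_not[OF h3] unfolding M(2) by blast
    moreover have "OD2 l = OD2 (m0::('a^4) set set)" unfolding M(2) by (rule ps.OD2_f[OF m0_points])
    moreover have "OD0 l = OD0 (m0::('a^4) set set)" unfolding M(2) by (rule ps.OD0_f[OF m0_points])
    ultimately show ?thesis using OD2v OD0n OD0s by simp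
  qed
  show ?thesis unfolding Let_def L7
    using m0_in_orbit all by blast
qed

end
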